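(* Let $\mathcal A$ be an abelian category and let $0\to F\xrightarrow{i} M\xrightarrow{d} C\to 0$ be a fully invariant short exact sequence in $\mathcal A$. (1) The following are equivalent: (i) $M$ is (strongly) self-$F$-split and, for every morphism $g:M\to M$ with pullback square $P\xrightarrow{j}M$, $P\xrightarrow{f}F$ of $i$ along $g$ (so $gj=if$), the unique morphism $l:\mathrm{Ker}(g)\to P$ with $jl=\ker(g)$ is a (fully invariant) section; (ii) $M$ is (strongly) self-Rickart and $M\cong F\oplus C$. (2) The following are equivalent: (i) $M$ is dual (strongly) self-$F$-split and, for every morphism $g:M\to M$ with pushout square $M\xrightarrow{p}Q$, $C\xrightarrow{h}Q$ of $d$ along $g$ (so $pg=hd$), the unique morphism $q:Q\to \mathrm{Coker}(g)$ with $qp=\mathrm{coker}(g)$ is a (fully coinvariant) retraction; (ii) $M$ is dual (strongly) self-Rickart and $M\cong F\oplus C$.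
   Context: Convention: each statement containing parenthetical words holds in two versions: one obtained by deleting all parenthetical words and one obtained by keeping all of them. Let $\mathcal A$ be an abelian category. A morphism $s:X\to Y$ is a section if $ts=1_X$ for some $t$, and a retraction if $st=1_Y$ for some $t$. A monomorphism $i:K\to M$ is fully invariant if for every morphism $h:M\to M$ there is $\alpha:K\to K$ with $hi=i\alpha$; an epimorphism $d:M\to C$ is fully coinvariant if for every $h:M\to M$ there is $\beta:C\to C$ with $dh=\beta d$. A short exact sequence $0\to F\xrightarrow{i}M\xrightarrow{d}C\to 0$ is fully invariant if $i$ is fully invariant. $M$ is (strongly) self-$F$-split if for every morphism $g:M\to M$, the morphism $j:P\to M$ in the pullback of $i$ along $g$ (equivalently $\ker(dg)$) is a (fully invariant) section; $M$ is dual (strongly) self-$F$-split if for every $g:M\to M$, the morphism $p:M\to Q$ in the pushout of $d$ along $g$ (equivalently $\mathrm{coker}(gi)$) is a (fully coinvariant) retraction. $M$ is (strongly) self-Rickart if for every $f:M\to M$, $\ker(f)$ is a (fully invariant) section, and dual (strongly) self-Rickart if for every $f:M\to M$, $\mathrm{coker}(f)$ is a (fully coinvariant) retraction. *)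

theory Defs
  imports Main
begin

text \<open>A category given by its objects, arrows, domain/codomain, composition
  (Cp g f means g after f, defined when Cod f = Dom g) and identities.\<close>
record ('o, 'm) cat =
  Ob :: "'o set"
  Ar :: "'m set"
  Dom :: "'m \<Rightarrow> 'o"
  Cod :: "'m \<Rightarrow> 'o"
  Cp :: "'m \<Rightarrow> 'm \<Rightarrow> 'm"
  Id :: "'o \<Rightarrow> 'm"

definition hom :: "('o, 'm) cat \<Rightarrow> 'o \<Rightarrow> 'o \<Rightarrow> 'm set" where
  "hom A a b = {f \<in> Ar A. Dom A f = a \<and> Cod A f = b}"

definition category :: "('o, 'm) cat \<Rightarrow> bool" where
  "category A \<longleftrightarrow>
     (\<forall>f\<in>Ar A. Dom A f \<in> Ob A \<and> Cod A f \<in> Ob A) \<and>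
     (\<forall>a\<in>Ob A. Id A a \<in> hom A a a) \<and>
     (\<forall>f\<in>Ar A. \<forall>g\<in>Ar A. Cod A f = Dom A g \<longrightarrow> Cp A g f \<in> hom A (Dom A f) (Cod A g)) \<and>
     (\<forall>f\<in>Ar A. Cp A f (Id A (Dom A f)) = f \<and> Cp A (Id A (Cod A f)) f = f) \<and>
     (\<forall>f\<in>Ar A. \<forall>g\<in>Ar A. \<forall>h\<in>Ar A. Cod A f = Dom A g \<and> Cod A g = Dom A h \<longrightarrow>
        Cp A h (Cp A g f) = Cp A (Cp A h g) f)"

definition mono :: "('o, 'm) cat \<Rightarrow> 'm \<Rightarrow> bool" where
  "mono A m \<longleftrightarrow> m \<in> Ar A \<and>
     (\<forall>x\<in>Ar A. \<forall>y\<in>Ar A. Cod A x = Dom A m \<and> Cod A y = Dom A m \<and> Dom A x = Dom A y \<and>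
        Cp A m x = Cp A m y \<longrightarrow> x = y)"

definition epi :: "('o, 'm) cat \<Rightarrow> 'm \<Rightarrow> bool" where
  "epi A e \<longleftrightarrow> e \<in> Ar A \<and>
     (\<forall>x\<in>Ar A. \<forall>y\<in>Ar A. Dom A x = Cod A e \<and> Dom A y = Cod A e \<and> Cod A x = Cod A y \<and>
        Cp A x e = Cp A y e \<longrightarrow> x = y)"

definition zero_obj :: "('o, 'm) cat \<Rightarrow> 'o \<Rightarrow> bool" where
  "zero_obj A z \<longleftrightarrow> z \<in> Ob A \<and>
     (\<forall>a\<in>Ob A. (\<exists>!f. f \<in> hom A a z) \<and> (\<exists>!f. f \<in> hom A z a))"

definition zero_mor :: "('o, 'm) cat \<Rightarrow> 'm \<Rightarrow> bool" where
  "zero_mor A f \<longleftrightarrow> f \<in> Ar A \<and>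
     (\<exists>z u v. zero_obj A z \<and> u \<in> hom A (Dom A f) z \<and> v \<in> hom A z (Cod A f) \<and> f = Cp A v u)"

definition kernel :: "('o, 'm) cat \<Rightarrow> 'm \<Rightarrow> 'm \<Rightarrow> bool" where
  "kernel A f k \<longleftrightarrow> f \<in> Ar A \<and> k \<in> Ar A \<and> Cod A k = Dom A f \<and> zero_mor A (Cp A f k) \<and>
     (\<forall>x\<in>Ar A. Cod A x = Dom A f \<and> zero_mor A (Cp A f x) \<longrightarrow>
        (\<exists>!u. u \<in> hom A (Dom A x) (Dom A k) \<and> Cp A k u = x))"

definition cokernel :: "('o, 'm) cat \<Rightarrow> 'm \<Rightarrow> 'm \<Rightarrow> bool" where
  "cokernel A f c \<longleftrightarrow> f \<in> Ar A \<and> c \<in> Ar A \<and> Dom A c = Cod A f \<and> zero_mor A (Cp A c f) \<and>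
     (\<forall>x\<in>Ar A. Dom A x = Cod A f \<and> zero_mor A (Cp A x f) \<longrightarrow>
        (\<exists>!u. u \<in> hom A (Cod A c) (Cod A x) \<and> Cp A u c = x))"

definition product :: "('o, 'm) cat \<Rightarrow> 'm \<Rightarrow> 'm \<Rightarrow> bool" where
  "product A p1 p2 \<longleftrightarrow> p1 \<in> Ar A \<and> p2 \<in> Ar A \<and> Dom A p1 = Dom A p2 \<and>
     (\<forall>x\<in>Ar A. \<forall>y\<in>Ar A. Dom A x = Dom A y \<and> Cod A x = Cod A p1 \<and> Cod A y = Cod A p2 \<longrightarrow>
        (\<exists>!u. u \<in> hom A (Dom A x) (Dom A p1) \<and> Cp A p1 u = x \<and> Cp A p2 u = y))"

definition coproduct :: "('o, 'm) cat \<Rightarrow> 'm \<Rightarrow> 'm \<Rightarrow> bool" where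
  "coproduct A e1 e2 \<longleftrightarrow> e1 \<in> Ar A \<and> e2 \<in> Ar A \<and> Cod A e1 = Cod A e2 \<and>
     (\<forall>x\<in>Ar A. \<forall>y\<in>Ar A. Cod A x = Cod A y \<and> Dom A x = Dom A e1 \<and> Dom A y = Dom A e2 \<longrightarrow>
        (\<exists>!u. u \<in> hom A (Cod A e1) (Cod A x) \<and> Cp A u e1 = x \<and> Cp A u e2 = y))"

text \<open>Abelian category (Freyd's definition): zero object, binary products and
  coproducts, kernels and cokernels, every mono is a kernel and every epi a cokernel.\<close>
definition abelian :: "('o, 'm) cat \<Rightarrow> bool" where
  "abelian A \<longleftrightarrow> category A \<and> (\<exists>z. zero_obj A z) \<and>
     (\<forall>a\<in>Ob A. \<forall>b\<in>Ob A. \<exists>p1 p2. product A p1 p2 \<and> Cod A p1 = a \<and> Cod A p2 = b) \<and>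
     (\<forall>a\<in>Ob A. \<forall>b\<in>Ob A. \<exists>e1 e2. coproduct A e1 e2 \<and> Dom A e1 = a \<and> Dom A e2 = b) \<and>
     (\<forall>f\<in>Ar A. \<exists>k. kernel A f k) \<and> (\<forall>f\<in>Ar A. \<exists>c. cokernel A f c) \<and>
     (\<forall>m. mono A m \<longrightarrow> (\<exists>f. kernel A f m)) \<and>
     (\<forall>e. epi A e \<longrightarrow> (\<exists>f. cokernel A f e))"

definition iso :: "('o, 'm) cat \<Rightarrow> 'm \<Rightarrow> bool" where
  "iso A f \<longleftrightarrow> f \<in> Ar A \<and> (\<exists>g\<in>hom A (Cod A f) (Dom A f).
     Cp A g f = Id A (Dom A f) \<and> Cp A f g = Id A (Cod A f))"

definition isomorphic :: "('o, 'm) cat \<Rightarrow> 'o \<Rightarrow> 'o \<Rightarrow> bool" where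
  "isomorphic A a b \<longleftrightarrow> (\<exists>f\<in>hom A a b. iso A f)"

text \<open>M is isomorphic to the direct sum (biproduct = product in an abelian category) of F and C.\<close>
definition iso_direct_sum :: "('o, 'm) cat \<Rightarrow> 'o \<Rightarrow> 'o \<Rightarrow> 'o \<Rightarrow> bool" where
  "iso_direct_sum A M F C \<longleftrightarrow>
     (\<exists>p1 p2. product A p1 p2 \<and> Cod A p1 = F \<and> Cod A p2 = C \<and> isomorphic A M (Dom A p1))"

definition is_section :: "('o, 'm) cat \<Rightarrow> 'm \<Rightarrow> bool" where
  "is_section A s \<longleftrightarrow> s \<in> Ar A \<and> (\<exists>t\<in>hom A (Cod A s) (Dom A s). Cp A t s = Id A (Dom A s))"

definition is_retraction :: "('o, 'm) cat \<Rightarrow> 'm \<Rightarrow> bool" where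
  "is_retraction A s \<longleftrightarrow> s \<in> Ar A \<and> (\<exists>t\<in>hom A (Cod A s) (Dom A s). Cp A s t = Id A (Cod A s))"

definition fully_invariant :: "('o, 'm) cat \<Rightarrow> 'm \<Rightarrow> bool" where
  "fully_invariant A i \<longleftrightarrow> mono A i \<and>
     (\<forall>h\<in>hom A (Cod A i) (Cod A i). \<exists>\<alpha>\<in>hom A (Dom A i) (Dom A i). Cp A h i = Cp A i \<alpha>)"

definition fully_coinvariant :: "('o, 'm) cat \<Rightarrow> 'm \<Rightarrow> bool" where
  "fully_coinvariant A d \<longleftrightarrow> epi A d \<and>
     (\<forall>h\<in>hom A (Dom A d) (Dom A d). \<exists>\<beta>\<in>hom A (Cod A d) (Cod A d). Cp A d h = Cp A \<beta> d)"

text \<open>Parenthetical convention: flag st = True gives the "strongly"/"fully (co)invariant" version.\<close>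
definition sec_st :: "('o, 'm) cat \<Rightarrow> bool \<Rightarrow> 'm \<Rightarrow> bool" where
  "sec_st A st s \<longleftrightarrow> is_section A s \<and> (st \<longrightarrow> fully_invariant A s)"

definition ret_st :: "('o, 'm) cat \<Rightarrow> bool \<Rightarrow> 'm \<Rightarrow> bool" where
  "ret_st A st s \<longleftrightarrow> is_retraction A s \<and> (st \<longrightarrow> fully_coinvariant A s)"

definition short_exact :: "('o, 'm) cat \<Rightarrow> 'm \<Rightarrow> 'm \<Rightarrow> bool" where
  "short_exact A i d \<longleftrightarrow> mono A i \<and> epi A d \<and> kernel A d i \<and> cokernel A i d"

definition pullback :: "('o, 'm) cat \<Rightarrow> 'm \<Rightarrow> 'm \<Rightarrow> 'm \<Rightarrow> 'm \<Rightarrow> bool" where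
  "pullback A i g j f \<longleftrightarrow> i \<in> Ar A \<and> g \<in> Ar A \<and> j \<in> Ar A \<and> f \<in> Ar A \<and>
     Cod A i = Cod A g \<and> Dom A j = Dom A f \<and> Cod A j = Dom A g \<and> Cod A f = Dom A i \<and>
     Cp A g j = Cp A i f \<and>
     (\<forall>x\<in>Ar A. \<forall>y\<in>Ar A. Dom A x = Dom A y \<and> Cod A x = Dom A g \<and> Cod A y = Dom A i \<and>
        Cp A g x = Cp A i y \<longrightarrow>
        (\<exists>!u. u \<in> hom A (Dom A x) (Dom A j) \<and> Cp A j u = x \<and> Cp A f u = y))"

definition pushout :: "('o, 'm) cat \<Rightarrow> 'm \<Rightarrow> 'm \<Rightarrow> 'm \<Rightarrow> 'm \<Rightarrow> bool" where
  "pushout A d g p h \<longleftrightarrow> d \<in> Ar A \<and> g \<in> Ar A \<and> p \<in> Ar A \<and> h \<in> Ar A \<and>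
     Dom A d = Dom A g \<and> Cod A p = Cod A h \<and> Dom A p = Cod A g \<and> Dom A h = Cod A d \<and>
     Cp A p g = Cp A h d \<and>
     (\<forall>x\<in>Ar A. \<forall>y\<in>Ar A. Cod A x = Cod A y \<and> Dom A x = Cod A g \<and> Dom A y = Cod A d \<and>
        Cp A x g = Cp A y d \<longrightarrow>
        (\<exists>!u. u \<in> hom A (Cod A p) (Cod A x) \<and> Cp A u p = x \<and> Cp A u h = y))"

definition self_F_split :: "('o, 'm) cat \<Rightarrow> bool \<Rightarrow> 'm \<Rightarrow> bool" where
  "self_F_split A st i \<longleftrightarrow>
     (\<forall>g\<in>hom A (Cod A i) (Cod A i). \<forall>j f. pullback A i g j f \<longrightarrow> sec_st A st j)"

definition dual_self_F_split :: "('o, 'm) cat \<Rightarrow> bool \<Rightarrow> 'm \<Rightarrow> bool" where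
  "dual_self_F_split A st d \<longleftrightarrow>
     (\<forall>g\<in>hom A (Dom A d) (Dom A d). \<forall>p h. pushout A d g p h \<longrightarrow> ret_st A st p)"

definition self_rickart :: "('o, 'm) cat \<Rightarrow> bool \<Rightarrow> 'o \<Rightarrow> bool" where
  "self_rickart A st M \<longleftrightarrow> (\<forall>f\<in>hom A M M. \<forall>k. kernel A f k \<longrightarrow> sec_st A st k)"

definition dual_self_rickart :: "('o, 'm) cat \<Rightarrow> bool \<Rightarrow> 'o \<Rightarrow> bool" where
  "dual_self_rickart A st M \<longleftrightarrow> (\<forall>f\<in>hom A M M. \<forall>c. cokernel A f c \<longrightarrow> ret_st A st c)"

definition kernel_comparison_sections :: "('o, 'm) cat \<Rightarrow> bool \<Rightarrow> 'm \<Rightarrow> bool" where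
  "kernel_comparison_sections A st i \<longleftrightarrow>
     (\<forall>g\<in>hom A (Cod A i) (Cod A i). \<forall>j f k l.
        pullback A i g j f \<and> kernel A g k \<and> l \<in> hom A (Dom A k) (Dom A j) \<and> Cp A j l = k
        \<longrightarrow> sec_st A st l)"

definition cokernel_comparison_retractions :: "('o, 'm) cat \<Rightarrow> bool \<Rightarrow> 'm \<Rightarrow> bool" where
  "cokernel_comparison_retractions A st d \<longleftrightarrow>
     (\<forall>g\<in>hom A (Dom A d) (Dom A d). \<forall>p h c q.
        pushout A d g p h \<and> cokernel A g c \<and> q \<in> hom A (Cod A p) (Cod A c) \<and> Cp A q p = c
        \<longrightarrow> ret_st A st q)"

end

theory Submission
  imports Defs
begin


locale ab =
  fixes A :: "('o, 'm) cat"
  assumes ab: "abelian A"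
begin

abbreviation comp (infixl "\<cdot>" 55) where "g \<cdot> f \<equiv> Cp A g f"

lemma cat: "category A" using ab by (simp add: abelian_def)

lemma hom_iff: "f \<in> hom A a b \<longleftrightarrow> f \<in> Ar A \<and> Dom A f = a \<and> Cod A f = b"
  by (simp add: hom_def)

lemma ar_hom: "f \<in> Ar A \<Longrightarrow> f \<in> hom A (Dom A f) (Cod A f)"
  by (simp add: hom_def)

lemma dom_ob: "f \<in> Ar A \<Longrightarrow> Dom A f \<in> Ob A"
  using cat by (simp add: category_def)
lemma cod_ob: "f \<in> Ar A \<Longrightarrow> Cod A f \<in> Ob A"
  using cat by (simp add: category_def)

lemma hom_ob1: "f \<in> hom A a b \<Longrightarrow> a \<in> Ob A"
  using dom_ob by (auto simp: hom_def)
lemma hom_ob2: "f \<in> hom A a b \<Longrightarrow> b \<in> Ob A"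
  using cod_ob by (auto simp: hom_def)

lemma id_hom: "a \<in> Ob A \<Longrightarrow> Id A a \<in> hom A a a"
  using cat by (simp add: category_def)

lemma comp_hom: "f \<in> hom A a b \<Longrightarrow> g \<in> hom A b c \<Longrightarrow> g \<cdot> f \<in> hom A a c"
  using cat unfolding category_def hom_def by auto

lemma id_l: "f \<in> hom A a b \<Longrightarrow> Id A b \<cdot> f = f"
  using cat unfolding category_def hom_def by auto
lemma id_r: "f \<in> hom A a b \<Longrightarrow> f \<cdot> Id A a = f"
  using cat unfolding category_def hom_def by auto

lemma assoc: "f \<in> hom A a b \<Longrightarrow> g \<in> hom A b c \<Longrightarrow> h \<in> hom A c d \<Longrightarrow>
   h \<cdot> (g \<cdot> f) = (h \<cdot> g) \<cdot> f"
  using cat unfolding category_def hom_def by auto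

lemma monoD: assumes "mono A m" "x \<in> hom A X (Dom A m)" "y \<in> hom A X (Dom A m)" "m \<cdot> x = m \<cdot> y"
  shows "x = y"
proof -
  have H: "\<forall>x\<in>Ar A. \<forall>y\<in>Ar A. Cod A x = Dom A m \<and> Cod A y = Dom A m \<and> Dom A x = Dom A y \<and>
        m \<cdot> x = m \<cdot> y \<longrightarrow> x = y" using assms(1) unfolding mono_def by (elim conjE)
  show ?thesis using H[rule_format, of x y] assms(2-4) unfolding hom_iff by simp
qed
lemma epiD: assumes "epi A e" "x \<in> hom A (Cod A e) Y" "y \<in> hom A (Cod A e) Y" "x \<cdot> e = y \<cdot> e"
  shows "x = y"
proof -
  have H: "\<forall>x\<in>Ar A. \<forall>y\<in>Ar A. Dom A x = Cod A e \<and> Dom A y = Cod A e \<and> Cod A x = Cod A y \<and>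
        x \<cdot> e = y \<cdot> e \<longrightarrow> x = y" using assms(1) unfolding epi_def by (elim conjE)
  show ?thesis using H[rule_format, of x y] assms(2-4) unfolding hom_iff by simp
qed

lemma zero_ar: "zero_mor A f \<Longrightarrow> f \<in> Ar A" by (simp add: zero_mor_def)

lemma zero_obj_ob: "zero_obj A z \<Longrightarrow> z \<in> Ob A" by (simp add: zero_obj_def)

lemma zero_I: assumes "zero_obj A z" "u \<in> hom A a z" "v \<in> hom A z b"
  shows "zero_mor A (v \<cdot> u)"
proof -
  have vu: "v \<cdot> u \<in> hom A a b" using assms comp_hom by blast
  show ?thesis unfolding zero_mor_def
    apply (rule conjI)
    using vu apply (simp add: hom_iff)
    apply (rule exI[of _ z], rule exI[of _ u], rule exI[of _ v])
    using assms vu by (simp add: hom_iff)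
qed

lemma zero_E: assumes "zero_mor A f"
  obtains z u v where "zero_obj A z" "u \<in> hom A (Dom A f) z" "v \<in> hom A z (Cod A f)" "f = v \<cdot> u"
  using assms unfolding zero_mor_def hom_iff by blast

lemma zero_in_uniq: assumes "zero_obj A z" "f \<in> hom A a z" "g \<in> hom A a z" shows "f = g"
proof -
  have "a \<in> Ob A" using assms(2) hom_ob1 by blast
  hence "\<exists>!f. f \<in> hom A a z" using assms(1) unfolding zero_obj_def by blast
  thus ?thesis using assms by blast
qed

lemma zero_out_uniq: assumes "zero_obj A z" "f \<in> hom A z a" "g \<in> hom A z a" shows "f = g"
proof -
  have "a \<in> Ob A" using assms(2) hom_ob2 by blast
  hence "\<exists>!f. f \<in> hom A z a" using assms(1) unfolding zero_obj_def by blast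
  thus ?thesis using assms by blast
qed

lemma zero_comp_r: assumes "zero_mor A f" "g \<in> hom A a (Dom A f)"
  shows "zero_mor A (f \<cdot> g)"
proof -
  obtain z u v where z: "zero_obj A z" "u \<in> hom A (Dom A f) z" "v \<in> hom A z (Cod A f)" "f = v \<cdot> u"
    using assms(1) by (rule zero_E)
  have "f \<cdot> g = v \<cdot> (u \<cdot> g)" using z(4) assoc[OF assms(2) z(2) z(3)] by simp
  moreover have "u \<cdot> g \<in> hom A a z" using z assms(2) comp_hom by blast
  ultimately show ?thesis using zero_I z by simp
qed

lemma zero_comp_l: assumes "zero_mor A f" "h \<in> hom A (Cod A f) c"
  shows "zero_mor A (h \<cdot> f)"
proof -
  obtain z u v where z: "zero_obj A z" "u \<in> hom A (Dom A f) z" "v \<in> hom A z (Cod A f)" "f = v \<cdot> u"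
    using assms(1) by (rule zero_E)
  have "h \<cdot> f = (h \<cdot> v) \<cdot> u" using z(4) assoc[OF z(2) z(3) assms(2)] by simp
  moreover have "h \<cdot> v \<in> hom A z c" using z assms(2) comp_hom by blast
  ultimately show ?thesis using zero_I z by simp
qed

lemma zero_unique: assumes "zero_mor A f" "zero_mor A g" "Dom A f = Dom A g" "Cod A f = Cod A g"
  shows "f = g"
proof -
  obtain z u v where z: "zero_obj A z" "u \<in> hom A (Dom A f) z" "v \<in> hom A z (Cod A f)" "f = v \<cdot> u"
    using assms(1) by (rule zero_E)
  obtain z' u' v' where z': "zero_obj A z'" "u' \<in> hom A (Dom A g) z'" "v' \<in> hom A z' (Cod A g)" "g = v' \<cdot> u'"
    using assms(2) by (rule zero_E)
  have zo: "z \<in> Ob A" "z' \<in> Ob A" using z z' zero_obj_ob by auto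
  obtain w where w: "w \<in> hom A z z'" using z(1) zo unfolding zero_obj_def by blast
  have "w \<cdot> u \<in> hom A (Dom A f) z'" using w z comp_hom by blast
  hence 1: "w \<cdot> u = u'" using zero_in_uniq[OF z'(1)] z'(2) assms(3) by simp
  have "v' \<cdot> w \<in> hom A z (Cod A f)" using w z' comp_hom assms(4) by simp
  hence 2: "v' \<cdot> w = v" using zero_out_uniq[OF z(1)] z(3) by simp
  have "g = v' \<cdot> (w \<cdot> u)" using 1 z' by simp
  also have "\<dots> = (v' \<cdot> w) \<cdot> u" using assoc[OF z(2) w] z'(3) assms(4) by simp
  finally show ?thesis using 2 z by simp
qed

lemma zero_exists: assumes "a \<in> Ob A" "b \<in> Ob A" shows "\<exists>f \<in> hom A a b. zero_mor A f"
proof -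
  obtain z where z: "zero_obj A z" using ab by (auto simp: abelian_def)
  obtain u where u: "u \<in> hom A a z" using z assms unfolding zero_obj_def by blast
  obtain v where v: "v \<in> hom A z b" using z assms unfolding zero_obj_def by blast
  have vu: "v \<cdot> u \<in> hom A a b" using u v comp_hom by blast
  have "zero_mor A (v \<cdot> u)" using zero_I z u v by blast
  thus ?thesis using vu by blast
qed

definition zm :: "'o \<Rightarrow> 'o \<Rightarrow> 'm" where
  "zm a b = (SOME f. f \<in> hom A a b \<and> zero_mor A f)"

lemma zm: assumes "a \<in> Ob A" "b \<in> Ob A" shows "zm a b \<in> hom A a b" "zero_mor A (zm a b)"
  using someI_ex[OF zero_exists[OF assms, unfolded Bex_def]] unfolding zm_def by auto

lemma zero_eq_zm: assumes "zero_mor A f" "f \<in> hom A a b" shows "f = zm a b"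
proof -
  have a: "a \<in> Ob A" "b \<in> Ob A" using assms(2) hom_ob1 hom_ob2 by auto
  show ?thesis using zero_unique[OF assms(1) zm(2)[OF a]] zm(1)[OF a] assms(2) by (simp add: hom_iff)
qed

lemma mono_zero: assumes "mono A m" "zero_mor A (m \<cdot> x)" "x \<in> hom A X (Dom A m)"
  shows "zero_mor A x"
proof -
  have m: "m \<in> hom A (Dom A m) (Cod A m)" using assms(1) ar_hom by (simp add: mono_def)
  have X: "X \<in> Ob A" using assms(3) hom_ob1 by blast
  have D: "Dom A m \<in> Ob A" using m hom_ob1 by blast
  note z = zm[OF X D]
  have "zero_mor A (m \<cdot> zm X (Dom A m))" using zero_comp_l[OF z(2)] m z(1) by (simp add: hom_iff)
  moreover have "m \<cdot> x \<in> hom A X (Cod A m)" "m \<cdot> zm X (Dom A m) \<in> hom A X (Cod A m)"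
    using comp_hom m assms(3) z(1) by blast+
  ultimately have "m \<cdot> x = m \<cdot> zm X (Dom A m)" using zero_unique assms(2) by (simp add: hom_iff)
  hence "x = zm X (Dom A m)" using monoD[OF assms(1) assms(3) z(1)] by simp
  thus ?thesis using z by simp
qed

lemma epi_zero: assumes "epi A e" "zero_mor A (x \<cdot> e)" "x \<in> hom A (Cod A e) Y"
  shows "zero_mor A x"
proof -
  have m: "e \<in> hom A (Dom A e) (Cod A e)" using assms(1) ar_hom by (simp add: epi_def)
  have X: "Y \<in> Ob A" using assms(3) hom_ob2 by blast
  have D: "Cod A e \<in> Ob A" using m hom_ob2 by blast
  note z = zm[OF D X]
  have "zero_mor A (zm (Cod A e) Y \<cdot> e)" using zero_comp_r[OF z(2)] m z(1) by (simp add: hom_iff)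
  moreover have "x \<cdot> e \<in> hom A (Dom A e) Y" "zm (Cod A e) Y \<cdot> e \<in> hom A (Dom A e) Y"
    using comp_hom m assms(3) z(1) by blast+
  ultimately have "x \<cdot> e = zm (Cod A e) Y \<cdot> e" using zero_unique assms(2) by (simp add: hom_iff)
  hence "x = zm (Cod A e) Y" using epiD[OF assms(1) assms(3) z(1)] by simp
  thus ?thesis using z by simp
qed

end

context ab begin

lemma ex1_uniq: "\<exists>!u. P u \<Longrightarrow> P a \<Longrightarrow> P b \<Longrightarrow> a = b" by blast

lemma kernel_uniq: assumes "kernel A f k" "x \<in> hom A X (Dom A f)" "zero_mor A (f \<cdot> x)"
  shows "\<exists>!u. u \<in> hom A X (Dom A k) \<and> k \<cdot> u = x"
proof -
  have H: "\<forall>x\<in>Ar A. Cod A x = Dom A f \<and> zero_mor A (f \<cdot> x) \<longrightarrow>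
        (\<exists>!u. u \<in> hom A (Dom A x) (Dom A k) \<and> k \<cdot> u = x)" using assms(1) unfolding kernel_def by (elim conjE)
  show ?thesis using H[rule_format, of x] assms(2-3) unfolding hom_iff by simp
qed

lemma kernel_fac: assumes "kernel A f k" "x \<in> hom A X (Dom A f)" "zero_mor A (f \<cdot> x)"
  shows "\<exists>u \<in> hom A X (Dom A k). k \<cdot> u = x"
  using kernel_uniq[OF assms] by blast

lemma kernel_hom: "kernel A f k \<Longrightarrow> k \<in> hom A (Dom A k) (Dom A f)"
  unfolding kernel_def hom_iff by (elim conjE) simp

lemma kernel_zero: "kernel A f k \<Longrightarrow> zero_mor A (f \<cdot> k)"
  unfolding kernel_def by (elim conjE)

lemma kernel_ar: "kernel A f k \<Longrightarrow> f \<in> Ar A"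
  unfolding kernel_def by (elim conjE)

lemma mono_I: assumes "m \<in> Ar A"
  and "\<And>x y X. x \<in> hom A X (Dom A m) \<Longrightarrow> y \<in> hom A X (Dom A m) \<Longrightarrow> m \<cdot> x = m \<cdot> y \<Longrightarrow> x = y"
  shows "mono A m"
  unfolding mono_def
proof (intro conjI ballI impI)
  fix x y assume "x \<in> Ar A" "y \<in> Ar A" and h: "Cod A x = Dom A m \<and> Cod A y = Dom A m \<and> Dom A x = Dom A y \<and> m \<cdot> x = m \<cdot> y"
  thus "x = y" using assms(2)[of x "Dom A x" y] by (simp add: hom_iff)
qed (rule assms(1))

lemma epi_I: assumes "e \<in> Ar A"
  and "\<And>x y Y. x \<in> hom A (Cod A e) Y \<Longrightarrow> y \<in> hom A (Cod A e) Y \<Longrightarrow> x \<cdot> e = y \<cdot> e \<Longrightarrow> x = y"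
  shows "epi A e"
  unfolding epi_def
proof (intro conjI ballI impI)
  fix x y assume "x \<in> Ar A" "y \<in> Ar A" and h: "Dom A x = Cod A e \<and> Dom A y = Cod A e \<and> Cod A x = Cod A y \<and> x \<cdot> e = y \<cdot> e"
  thus "x = y" using assms(2)[of x "Cod A x" y] by (simp add: hom_iff)
qed (rule assms(1))

lemma mono_hom: "mono A m \<Longrightarrow> m \<in> hom A (Dom A m) (Cod A m)"
  unfolding mono_def by (elim conjE) (rule ar_hom)
lemma epi_hom: "epi A m \<Longrightarrow> m \<in> hom A (Dom A m) (Cod A m)"
  unfolding epi_def by (elim conjE) (rule ar_hom)

lemma kernel_mono: assumes "kernel A f k" shows "mono A k"
proof (rule mono_I)
  show "k \<in> Ar A" using kernel_hom[OF assms] by (simp add: hom_iff)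
  fix x y X assume x: "x \<in> hom A X (Dom A k)" and y: "y \<in> hom A X (Dom A k)" and e: "k \<cdot> x = k \<cdot> y"
  have kh: "k \<in> hom A (Dom A k) (Dom A f)" using kernel_hom[OF assms] .
  have kx: "k \<cdot> x \<in> hom A X (Dom A f)" using comp_hom[OF x kh] .
  have f: "f \<in> hom A (Dom A f) (Cod A f)" using ar_hom[OF kernel_ar[OF assms]] .
  have "f \<cdot> (k \<cdot> x) = (f \<cdot> k) \<cdot> x" using assoc[OF x kh f] by simp
  have "Dom A (f \<cdot> k) = Dom A k" using comp_hom[OF kh f] by (simp add: hom_iff)
  hence "zero_mor A ((f \<cdot> k) \<cdot> x)" using zero_comp_r[OF kernel_zero[OF assms], of x X] x by simp
  with \<open>f \<cdot> (k \<cdot> x) = (f \<cdot> k) \<cdot> x\<close> have z: "zero_mor A (f \<cdot> (k \<cdot> x))" by simp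
  have "\<exists>!u. u \<in> hom A X (Dom A k) \<and> k \<cdot> u = k \<cdot> x"
    using kernel_uniq[OF assms kx z] .
  thus "x = y" using x y e by (elim ex1E) metis
qed

lemma cokernel_uniq: assumes "cokernel A f c" "x \<in> hom A (Cod A f) Y" "zero_mor A (x \<cdot> f)"
  shows "\<exists>!u. u \<in> hom A (Cod A c) Y \<and> u \<cdot> c = x"
proof -
  have H: "\<forall>x\<in>Ar A. Dom A x = Cod A f \<and> zero_mor A (x \<cdot> f) \<longrightarrow>
        (\<exists>!u. u \<in> hom A (Cod A c) (Cod A x) \<and> u \<cdot> c = x)" using assms(1) unfolding cokernel_def by (elim conjE)
  show ?thesis using H[rule_format, of x] assms(2-3) unfolding hom_iff by simp
qed

lemma cokernel_fac: assumes "cokernel A f c" "x \<in> hom A (Cod A f) Y" "zero_mor A (x \<cdot> f)"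
  shows "\<exists>u \<in> hom A (Cod A c) Y. u \<cdot> c = x"
  using cokernel_uniq[OF assms] by blast

lemma cokernel_hom: "cokernel A f c \<Longrightarrow> c \<in> hom A (Cod A f) (Cod A c)"
  unfolding cokernel_def hom_iff by (elim conjE) simp

lemma cokernel_zero: "cokernel A f c \<Longrightarrow> zero_mor A (c \<cdot> f)"
  unfolding cokernel_def by (elim conjE)

lemma cokernel_ar: "cokernel A f c \<Longrightarrow> f \<in> Ar A"
  unfolding cokernel_def by (elim conjE)

lemma cokernel_epi: assumes "cokernel A f c" shows "epi A c"
proof (rule epi_I)
  show "c \<in> Ar A" using cokernel_hom[OF assms] by (simp add: hom_iff)
  fix x y Y assume x: "x \<in> hom A (Cod A c) Y" and y: "y \<in> hom A (Cod A c) Y" and e: "x \<cdot> c = y \<cdot> c"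
  have kh: "c \<in> hom A (Cod A f) (Cod A c)" using cokernel_hom[OF assms] .
  have kx: "x \<cdot> c \<in> hom A (Cod A f) Y" using comp_hom[OF kh x] .
  have f: "f \<in> hom A (Dom A f) (Cod A f)" using ar_hom[OF cokernel_ar[OF assms]] .
  have "(x \<cdot> c) \<cdot> f = x \<cdot> (c \<cdot> f)" using assoc[OF f kh x] by simp
  have "Cod A (c \<cdot> f) = Cod A c" using comp_hom[OF f kh] by (simp add: hom_iff)
  hence "zero_mor A (x \<cdot> (c \<cdot> f))" using zero_comp_l[OF cokernel_zero[OF assms], of x Y] x by simp
  with \<open>(x \<cdot> c) \<cdot> f = x \<cdot> (c \<cdot> f)\<close> have z: "zero_mor A ((x \<cdot> c) \<cdot> f)" by simp
  have "\<exists>!u. u \<in> hom A (Cod A c) Y \<and> u \<cdot> c = x \<cdot> c"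
    using cokernel_uniq[OF assms kx z] .
  thus "x = y" using x y e by (elim ex1E) metis
qed

lemma prod_uniq0: assumes "product A p1 p2" "x \<in> hom A X (Cod A p1)" "y \<in> hom A X (Cod A p2)"
  shows "\<exists>!u. u \<in> hom A X (Dom A p1) \<and> p1 \<cdot> u = x \<and> p2 \<cdot> u = y"
proof -
  have H: "\<forall>x\<in>Ar A. \<forall>y\<in>Ar A. Dom A x = Dom A y \<and> Cod A x = Cod A p1 \<and> Cod A y = Cod A p2 \<longrightarrow>
        (\<exists>!u. u \<in> hom A (Dom A x) (Dom A p1) \<and> p1 \<cdot> u = x \<and> p2 \<cdot> u = y)"
    using assms(1) unfolding product_def by (elim conjE)
  show ?thesis using H[rule_format, of x y] assms(2-3) unfolding hom_iff by simp
qed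

lemma prod_ex: assumes "product A p1 p2" "x \<in> hom A X (Cod A p1)" "y \<in> hom A X (Cod A p2)"
  shows "\<exists>u \<in> hom A X (Dom A p1). p1 \<cdot> u = x \<and> p2 \<cdot> u = y"
  using prod_uniq0[OF assms] by blast

lemma prod_hom: assumes "product A p1 p2"
  shows "p1 \<in> hom A (Dom A p1) (Cod A p1)" "p2 \<in> hom A (Dom A p1) (Cod A p2)"
proof -
  have "p1 \<in> Ar A" "p2 \<in> Ar A" "Dom A p1 = Dom A p2" using assms unfolding product_def by auto
  thus "p1 \<in> hom A (Dom A p1) (Cod A p1)" "p2 \<in> hom A (Dom A p1) (Cod A p2)" by (simp_all add: hom_iff)
qed

lemma prod_uniq: assumes "product A p1 p2" "u \<in> hom A X (Dom A p1)" "v \<in> hom A X (Dom A p1)"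
  "p1 \<cdot> u = p1 \<cdot> v" "p2 \<cdot> u = p2 \<cdot> v" shows "u = v"
proof -
  note h = prod_hom[OF assms(1)]
  have a: "p1 \<cdot> u \<in> hom A X (Cod A p1)" "p2 \<cdot> u \<in> hom A X (Cod A p2)"
    using comp_hom[OF assms(2) h(1)] comp_hom[OF assms(2) h(2)] by simp_all
  have "\<exists>!w. w \<in> hom A X (Dom A p1) \<and> p1 \<cdot> w = p1 \<cdot> u \<and> p2 \<cdot> w = p2 \<cdot> u"
    using prod_uniq0[OF assms(1) a] .
  thus ?thesis using assms by (elim ex1E) metis
qed

lemma mono_comp: assumes "mono A m" "mono A n" "Cod A n = Dom A m" shows "mono A (m \<cdot> n)"
proof -
  note hm = mono_hom[OF assms(1)] and hn = mono_hom[OF assms(2)]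
  have mn: "m \<cdot> n \<in> hom A (Dom A n) (Cod A m)" using hm hn assms(3) comp_hom by simp
  show ?thesis
  proof (rule mono_I)
    show "m \<cdot> n \<in> Ar A" using mn by (simp add: hom_iff)
    fix x y X assume x: "x \<in> hom A X (Dom A (m \<cdot> n))" and y: "y \<in> hom A X (Dom A (m \<cdot> n))"
      and e: "m \<cdot> n \<cdot> x = m \<cdot> n \<cdot> y"
    have x': "x \<in> hom A X (Dom A n)" "y \<in> hom A X (Dom A n)" using x y mn by (simp_all add: hom_iff)
    have "m \<cdot> (n \<cdot> x) = m \<cdot> (n \<cdot> y)" using e assoc[OF x'(1) hn, of m] assoc[OF x'(2) hn, of m] hm assms(3) by simp
    hence "n \<cdot> x = n \<cdot> y" using monoD[OF assms(1)] comp_hom[OF x'(1) hn] comp_hom[OF x'(2) hn] assms(3) by simp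
    thus "x = y" using monoD[OF assms(2) x'(1) x'(2)] by simp
  qed
qed

lemma epi_comp: assumes "epi A m" "epi A n" "Cod A n = Dom A m" shows "epi A (m \<cdot> n)"
proof -
  note hm = epi_hom[OF assms(1)] and hn = epi_hom[OF assms(2)]
  have mn: "m \<cdot> n \<in> hom A (Dom A n) (Cod A m)" using hm hn assms(3) comp_hom by simp
  show ?thesis
  proof (rule epi_I)
    show "m \<cdot> n \<in> Ar A" using mn by (simp add: hom_iff)
    fix x y Y assume x: "x \<in> hom A (Cod A (m \<cdot> n)) Y" and y: "y \<in> hom A (Cod A (m \<cdot> n)) Y"
      and e: "x \<cdot> (m \<cdot> n) = y \<cdot> (m \<cdot> n)"
    have x': "x \<in> hom A (Cod A m) Y" "y \<in> hom A (Cod A m) Y" using x y mn by (simp_all add: hom_iff)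
    have "(x \<cdot> m) \<cdot> n = (y \<cdot> m) \<cdot> n" using e assoc[OF hn _ x'(1)] assoc[OF hn _ x'(2)] hm assms(3) by simp
    hence "x \<cdot> m = y \<cdot> m" using epiD[OF assms(2)] comp_hom[OF hm x'(1)] comp_hom[OF hm x'(2)] assms(3) by simp
    thus "x = y" using epiD[OF assms(1) x'(1) x'(2)] by simp
  qed
qed

lemma section_mono: assumes "is_section A s" shows "mono A s"
proof -
  obtain t where t: "t \<in> hom A (Cod A s) (Dom A s)" "t \<cdot> s = Id A (Dom A s)"
    using assms unfolding is_section_def by (elim conjE bexE) (rule that)
  have s: "s \<in> hom A (Dom A s) (Cod A s)" using assms ar_hom unfolding is_section_def by (elim conjE) simp
  show ?thesis
  proof (rule mono_I)
    show "s \<in> Ar A" using s by (simp add: hom_iff)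
    fix x y X assume x: "x \<in> hom A X (Dom A s)" and y: "y \<in> hom A X (Dom A s)" and e: "s \<cdot> x = s \<cdot> y"
    have "x = (t \<cdot> s) \<cdot> x" using t x id_l by simp
    also have "\<dots> = t \<cdot> (s \<cdot> y)" using assoc[OF x s t(1)] e by simp
    also have "\<dots> = y" using assoc[OF y s t(1)] t(2) id_l[OF y] by simp
    finally show "x = y" .
  qed
qed

lemma retraction_epi: assumes "is_retraction A s" shows "epi A s"
proof -
  obtain t where t: "t \<in> hom A (Cod A s) (Dom A s)" "s \<cdot> t = Id A (Cod A s)"
    using assms unfolding is_retraction_def by (elim conjE bexE) (rule that)
  have s: "s \<in> hom A (Dom A s) (Cod A s)" using assms ar_hom unfolding is_retraction_def by (elim conjE) simp
  show ?thesis
  proof (rule epi_I)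
    show "s \<in> Ar A" using s by (simp add: hom_iff)
    fix x y Y assume x: "x \<in> hom A (Cod A s) Y" and y: "y \<in> hom A (Cod A s) Y" and e: "x \<cdot> s = y \<cdot> s"
    have "x = x \<cdot> (s \<cdot> t)" using t x id_r by simp
    also have "\<dots> = (y \<cdot> s) \<cdot> t" using assoc[OF t(1) s x] e by simp
    also have "\<dots> = y" using assoc[OF t(1) s y] t(2) id_r[OF y] by simp
    finally show "x = y" .
  qed
qed

lemma section_I: assumes "s \<in> hom A a b" "t \<in> hom A b a" "t \<cdot> s = Id A a" shows "is_section A s"
  unfolding is_section_def using assms by (intro conjI bexI[of _ t]) (auto simp: hom_iff)
lemma retraction_I: assumes "s \<in> hom A a b" "t \<in> hom A b a" "s \<cdot> t = Id A b" shows "is_retraction A s"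
  unfolding is_retraction_def using assms by (intro conjI bexI[of _ t]) (auto simp: hom_iff)

lemma normal_mono: "mono A m \<Longrightarrow> \<exists>f. kernel A f m" using ab by (simp add: abelian_def)
lemma normal_epi: "epi A m \<Longrightarrow> \<exists>f. cokernel A f m" using ab by (simp add: abelian_def)

end

context ab begin

lemma iso_I: assumes "f \<in> hom A a b" "g \<in> hom A b a" "g \<cdot> f = Id A a" "f \<cdot> g = Id A b"
  shows "iso A f"
  unfolding iso_def using assms by (intro conjI bexI[of _ g]) (auto simp: hom_iff)

lemma iso_E: assumes "iso A f"
  obtains g where "g \<in> hom A (Cod A f) (Dom A f)" "g \<cdot> f = Id A (Dom A f)" "f \<cdot> g = Id A (Cod A f)"
  using assms unfolding iso_def by (elim conjE bexE) (rule that)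

lemma iso_ar: "iso A f \<Longrightarrow> f \<in> Ar A" unfolding iso_def by (elim conjE)

lemma prod_exists: assumes "a \<in> Ob A" "b \<in> Ob A"
  obtains p1 p2 where "product A p1 p2" "Cod A p1 = a" "Cod A p2 = b"
proof -
  have "\<forall>a\<in>Ob A. \<forall>b\<in>Ob A. \<exists>p1 p2. product A p1 p2 \<and> Cod A p1 = a \<and> Cod A p2 = b"
    using ab unfolding abelian_def by (elim conjE)
  thus ?thesis using assms that by blast
qed

lemma kernel_exists: assumes "f \<in> Ar A" obtains k where "kernel A f k"
proof -
  have "\<forall>f\<in>Ar A. \<exists>k. kernel A f k" using ab unfolding abelian_def by (elim conjE)
  thus ?thesis using assms that by blast
qed

lemma cokernel_exists: assumes "f \<in> Ar A" obtains k where "cokernel A f k"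
proof -
  have "\<forall>f\<in>Ar A. \<exists>k. cokernel A f k" using ab unfolding abelian_def by (elim conjE)
  thus ?thesis using assms that by blast
qed

lemma iso0: assumes f: "f \<in> hom A a b"
  and K: "\<And>x X. x \<in> hom A X a \<Longrightarrow> zero_mor A (f \<cdot> x) \<Longrightarrow> zero_mor A x"
  and C: "\<And>t Y. t \<in> hom A b Y \<Longrightarrow> zero_mor A (t \<cdot> f) \<Longrightarrow> zero_mor A t"
  shows "iso A f"
proof -
  have epi: "epi A f"
  proof (rule epi_I)
    show "f \<in> Ar A" using f by (simp add: hom_iff)
    fix x y Y assume x0: "x \<in> hom A (Cod A f) Y" and y0: "y \<in> hom A (Cod A f) Y" and e: "x \<cdot> f = y \<cdot> f"
    have x: "x \<in> hom A b Y" and y: "y \<in> hom A b Y" using x0 y0 f by (simp_all add: hom_iff)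
    have Y: "Y \<in> Ob A" using x hom_ob2 by blast
    obtain p1 p2 where P: "product A p1 p2" "Cod A p1 = Y" "Cod A p2 = Y" using prod_exists[OF Y Y] by blast
    define W where "W = Dom A p1"
    have p: "p1 \<in> hom A W Y" "p2 \<in> hom A W Y" using prod_hom[OF P(1)] P W_def by simp_all
    have iY: "Id A Y \<in> hom A Y Y" using id_hom[OF Y] .
    obtain \<Delta> where D: "\<Delta> \<in> hom A Y W" "p1 \<cdot> \<Delta> = Id A Y" "p2 \<cdot> \<Delta> = Id A Y"
      using prod_ex[OF P(1), of "Id A Y" Y "Id A Y"] iY P W_def by auto
    have monoD: "mono A \<Delta>"
    proof (rule mono_I)
      show "\<Delta> \<in> Ar A" using D by (simp add: hom_iff)
      fix u v X assume u0: "u \<in> hom A X (Dom A \<Delta>)" and v0: "v \<in> hom A X (Dom A \<Delta>)" and e: "\<Delta> \<cdot> u = \<Delta> \<cdot> v"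
      have u: "u \<in> hom A X Y" and v: "v \<in> hom A X Y" using u0 v0 D by (simp_all add: hom_iff)
      have "u = (p1 \<cdot> \<Delta>) \<cdot> u" using D id_l[OF u] by simp
      also have "\<dots> = p1 \<cdot> (\<Delta> \<cdot> v)" using assoc[OF u D(1) p(1)] e by simp
      also have "\<dots> = v" using assoc[OF v D(1) p(1)] D id_l[OF v] by simp
      finally show "u = v" .
    qed
    obtain c where c: "kernel A c \<Delta>" using normal_mono[OF monoD] by blast
    have cW: "Dom A c = W" using kernel_hom[OF c] D by (simp add: hom_iff)
    have ch: "c \<in> hom A W (Cod A c)" using ar_hom[OF kernel_ar[OF c]] cW by simp
    obtain g where g: "g \<in> hom A b W" "p1 \<cdot> g = x" "p2 \<cdot> g = y"
      using prod_ex[OF P(1), of x b y] x y P W_def by auto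
    have xf: "x \<cdot> f \<in> hom A a Y" using comp_hom[OF f x] .
    have gf: "g \<cdot> f = \<Delta> \<cdot> (x \<cdot> f)"
    proof (rule prod_uniq[OF P(1)])
      show "g \<cdot> f \<in> hom A a (Dom A p1)" using comp_hom[OF f g(1)] W_def by simp
      show "\<Delta> \<cdot> (x \<cdot> f) \<in> hom A a (Dom A p1)" using comp_hom[OF xf D(1)] W_def by simp
      have "p1 \<cdot> (g \<cdot> f) = x \<cdot> f" using assoc[OF f g(1) p(1)] g by simp
      moreover have "p1 \<cdot> (\<Delta> \<cdot> (x \<cdot> f)) = x \<cdot> f" using assoc[OF xf D(1) p(1)] D id_l[OF xf] by simp
      ultimately show "p1 \<cdot> (g \<cdot> f) = p1 \<cdot> (\<Delta> \<cdot> (x \<cdot> f))" by simp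
      have "p2 \<cdot> (g \<cdot> f) = x \<cdot> f" using assoc[OF f g(1) p(2)] g e by simp
      moreover have "p2 \<cdot> (\<Delta> \<cdot> (x \<cdot> f)) = x \<cdot> f" using assoc[OF xf D(1) p(2)] D id_l[OF xf] by simp
      ultimately show "p2 \<cdot> (g \<cdot> f) = p2 \<cdot> (\<Delta> \<cdot> (x \<cdot> f))" by simp
    qed
    have cD: "c \<cdot> \<Delta> \<in> hom A Y (Cod A c)" using comp_hom[OF D(1) ch] .
    have "zero_mor A ((c \<cdot> \<Delta>) \<cdot> (x \<cdot> f))" using zero_comp_r[OF kernel_zero[OF c], of "x \<cdot> f" a] xf cD
      by (simp add: hom_iff)
    moreover have "(c \<cdot> \<Delta>) \<cdot> (x \<cdot> f) = (c \<cdot> g) \<cdot> f"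
      using assoc[OF xf D(1) ch] gf assoc[OF f g(1) ch] by simp
    ultimately have "zero_mor A ((c \<cdot> g) \<cdot> f)" by simp
    hence zcg: "zero_mor A (c \<cdot> g)" using C[of "c \<cdot> g" "Cod A c"] comp_hom[OF g(1) ch] by simp
    obtain v where v: "v \<in> hom A b (Dom A \<Delta>)" "\<Delta> \<cdot> v = g"
      using kernel_fac[OF c, of g b] g(1) cW zcg by auto
    have v': "v \<in> hom A b Y" using v D by (simp add: hom_iff)
    have "x = (p1 \<cdot> \<Delta>) \<cdot> v" using g(2) v(2) assoc[OF v' D(1) p(1)] by simp
    hence xv: "x = v" using D id_l[OF v'] by simp
    have "y = (p2 \<cdot> \<Delta>) \<cdot> v" using g(3) v(2) assoc[OF v' D(1) p(2)] by simp
    hence "y = v" using D id_l[OF v'] by simp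
    thus "x = y" using xv by simp
  qed
  obtain g0 where g0: "cokernel A g0 f" using normal_epi[OF epi] by blast
  have g0h: "g0 \<in> hom A (Dom A g0) a" using cokernel_hom[OF g0] f ar_hom[OF cokernel_ar[OF g0]]
    by (simp add: hom_iff)
  have "zero_mor A g0" using K[OF g0h] cokernel_zero[OF g0] by simp
  moreover have ia: "Id A a \<in> hom A a a" using id_hom hom_ob1[OF f] by blast
  ultimately have "zero_mor A (Id A a \<cdot> g0)" using id_l[OF g0h] by simp
  then obtain u where u: "u \<in> hom A (Cod A f) a" "u \<cdot> f = Id A a"
    using cokernel_fac[OF g0, of "Id A a" a] ia g0h by (auto simp: hom_iff)
  have u': "u \<in> hom A b a" using u f by (simp add: hom_iff)
  have fu: "f \<cdot> u \<in> hom A b b" using comp_hom[OF u' f] .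
  have ib: "Id A b \<in> hom A b b" using id_hom hom_ob2[OF f] by blast
  have "(f \<cdot> u) \<cdot> f = f" using assoc[OF f u' f] u id_r[OF f] by simp
  also have "\<dots> = Id A b \<cdot> f" using id_l[OF f] by simp
  finally have "f \<cdot> u = Id A b" using epiD[OF epi, of "f \<cdot> u" b "Id A b"] fu ib f by (simp add: hom_iff)
  thus ?thesis using iso_I[OF f u' u(2)] by simp
qed

end

context ab begin

lemma se: assumes "short_exact A i d"
  shows "mono A i" "epi A d" "kernel A d i" "cokernel A i d"
    "i \<in> hom A (Dom A i) (Cod A i)" "d \<in> hom A (Cod A i) (Cod A d)"
proof -
  show m: "mono A i" and e: "epi A d" and k: "kernel A d i" and c: "cokernel A i d"
    using assms unfolding short_exact_def by auto
  show "i \<in> hom A (Dom A i) (Cod A i)" using mono_hom[OF m] .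
  show "d \<in> hom A (Cod A i) (Cod A d)" using cokernel_hom[OF c] .
qed

lemma zero_hom_zm: "zero_mor A f \<Longrightarrow> f = zm (Dom A f) (Cod A f)"
  using zero_eq_zm ar_hom zero_ar by blast

lemma core_r: assumes SE: "short_exact A i d" and r: "r \<in> hom A (Cod A i) (Dom A i)"
  and ri: "r \<cdot> i = Id A (Dom A i)"
  shows "iso_direct_sum A (Cod A i) (Dom A i) (Cod A d)"
proof -
  define F M C where "F = Dom A i" "M = Cod A i" "C = Cod A d"
  note S = se[OF SE]
  have i: "i \<in> hom A F M" and d: "d \<in> hom A M C" using S F_M_C_def by simp_all
  have r': "r \<in> hom A M F" using r F_M_C_def by simp
  have ri': "r \<cdot> i = Id A F" using ri F_M_C_def by simp
  have obs: "F \<in> Ob A" "M \<in> Ob A" "C \<in> Ob A" using i d hom_ob1 hom_ob2 by blast+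
  obtain p1 p2 where P: "product A p1 p2" "Cod A p1 = F" "Cod A p2 = C"
    using prod_exists[OF obs(1) obs(3)] by blast
  define PP where "PP = Dom A p1"
  have p: "p1 \<in> hom A PP F" "p2 \<in> hom A PP C" using prod_hom[OF P(1)] P PP_def by simp_all
  obtain u where u: "u \<in> hom A M PP" "p1 \<cdot> u = r" "p2 \<cdot> u = d"
    using prod_ex[OF P(1), of r M d] r' d P PP_def by auto
  note zFC = zm[OF obs(1) obs(3)] and zCF = zm[OF obs(3) obs(1)]
  have iF: "Id A F \<in> hom A F F" and iC: "Id A C \<in> hom A C C" using id_hom obs by blast+
  obtain \<iota>1 where i1: "\<iota>1 \<in> hom A F PP" "p1 \<cdot> \<iota>1 = Id A F" "p2 \<cdot> \<iota>1 = zm F C"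
    using prod_ex[OF P(1), of "Id A F" F "zm F C"] iF zFC P PP_def by auto
  obtain \<iota>2 where i2: "\<iota>2 \<in> hom A C PP" "p1 \<cdot> \<iota>2 = zm C F" "p2 \<cdot> \<iota>2 = Id A C"
    using prod_ex[OF P(1), of "zm C F" C "Id A C"] iC zCF P PP_def by auto
  have ui: "u \<cdot> i = \<iota>1"
  proof (rule prod_uniq[OF P(1)])
    show "u \<cdot> i \<in> hom A F (Dom A p1)" using comp_hom[OF i u(1)] PP_def by simp
    show "\<iota>1 \<in> hom A F (Dom A p1)" using i1 PP_def by simp
    show "p1 \<cdot> (u \<cdot> i) = p1 \<cdot> \<iota>1" using assoc[OF i u(1) p(1)] u ri' i1 by simp
    have "zero_mor A (d \<cdot> i)" using kernel_zero[OF S(3)] .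
    hence "d \<cdot> i = zm F C" using zero_eq_zm comp_hom[OF i d] by blast
    thus "p2 \<cdot> (u \<cdot> i) = p2 \<cdot> \<iota>1" using assoc[OF i u(1) p(2)] u i1 by simp
  qed
  have "iso A u"
  proof (rule iso0[OF u(1)])
    fix x X assume x: "x \<in> hom A X M" and z: "zero_mor A (u \<cdot> x)"
    have "zero_mor A (p2 \<cdot> (u \<cdot> x))" using zero_comp_l[OF z, of p2 C] p comp_hom[OF x u(1)]
      by (simp add: hom_iff)
    hence zd: "zero_mor A (d \<cdot> x)" using assoc[OF x u(1) p(2)] u by simp
    obtain y where y: "y \<in> hom A X F" "i \<cdot> y = x"
      using kernel_fac[OF S(3), of x X] x zd i d by (auto simp: hom_iff)
    have "zero_mor A (p1 \<cdot> (u \<cdot> x))" using zero_comp_l[OF z, of p1 F] p comp_hom[OF x u(1)]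
      by (simp add: hom_iff)
    hence "zero_mor A (r \<cdot> x)" using assoc[OF x u(1) p(1)] u by simp
    moreover have "r \<cdot> x = y" using y(2)[symmetric] assoc[OF y(1) i r'] ri' id_l[OF y(1)] by simp
    ultimately have "zero_mor A y" by simp
    thus "zero_mor A x" using zero_comp_l[of y i M] y i by (simp add: hom_iff)
  next
    fix t Y assume t: "t \<in> hom A PP Y" and z: "zero_mor A (t \<cdot> u)"
    have "zero_mor A ((t \<cdot> u) \<cdot> i)" using zero_comp_r[OF z, of i F] i u(1) comp_hom[OF u(1) t]
      by (simp add: hom_iff)
    hence zt1: "zero_mor A (t \<cdot> \<iota>1)" using assoc[OF i u(1) t] ui by simp
    have "is_retraction A p2" using retraction_I[OF p(2) i2(1) i2(3)] .
    hence ep2: "epi A p2" by (rule retraction_epi)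
    obtain g where g: "cokernel A g p2" using normal_epi[OF ep2] by blast
    have gh: "g \<in> hom A (Dom A g) PP" using cokernel_hom[OF g] ar_hom[OF cokernel_ar[OF g]] p(2)
      by (simp add: hom_iff)
    define G where "G = Dom A g"
    have gh': "g \<in> hom A G PP" using gh G_def by simp
    have p1g: "p1 \<cdot> g \<in> hom A G F" using comp_hom[OF gh' p(1)] .
    have "g = \<iota>1 \<cdot> (p1 \<cdot> g)"
    proof (rule prod_uniq[OF P(1)])
      show "g \<in> hom A G (Dom A p1)" using gh' PP_def by simp
      show "\<iota>1 \<cdot> (p1 \<cdot> g) \<in> hom A G (Dom A p1)" using comp_hom[OF p1g i1(1)] PP_def by simp
      show "p1 \<cdot> g = p1 \<cdot> (\<iota>1 \<cdot> (p1 \<cdot> g))" using assoc[OF p1g i1(1) p(1)] i1 id_l[OF p1g] by simp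
      have z1: "zero_mor A (p2 \<cdot> g)" using cokernel_zero[OF g] .
      have "zero_mor A (zm F C \<cdot> (p1 \<cdot> g))" using zero_comp_r[OF zFC(2), of "p1 \<cdot> g" G] p1g zFC(1)
        by (simp add: hom_iff)
      hence z2: "zero_mor A (p2 \<cdot> (\<iota>1 \<cdot> (p1 \<cdot> g)))" using assoc[OF p1g i1(1) p(2)] i1 by simp
      have a1: "p2 \<cdot> g \<in> hom A G C" using comp_hom[OF gh' p(2)] .
      have a2: "p2 \<cdot> (\<iota>1 \<cdot> (p1 \<cdot> g)) \<in> hom A G C" using comp_hom[OF comp_hom[OF p1g i1(1)] p(2)] .
      show "p2 \<cdot> g = p2 \<cdot> (\<iota>1 \<cdot> (p1 \<cdot> g))" using zero_unique[OF z1 z2] a1 a2 by (simp add: hom_iff)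
    qed
    hence "t \<cdot> g = (t \<cdot> \<iota>1) \<cdot> (p1 \<cdot> g)" using assoc[OF p1g i1(1) t] by simp
    hence ztg: "zero_mor A (t \<cdot> g)" using zero_comp_r[OF zt1, of "p1 \<cdot> g" G] p1g i1(1) t
      comp_hom[OF i1(1) t] by (simp add: hom_iff)
    obtain h where h: "h \<in> hom A C Y" "h \<cdot> p2 = t"
      using cokernel_fac[OF g, of t Y] t gh ztg p(2) by (auto simp: hom_iff)
    have "h \<cdot> d = t \<cdot> u" using assoc[OF u(1) p(2) h(1)] u h by simp
    hence "zero_mor A (h \<cdot> d)" using z by simp
    hence "zero_mor A h" using epi_zero[OF S(2), of h Y] h d by (simp add: hom_iff)
    thus "zero_mor A t" using zero_comp_r[of h p2 PP] h p(2) by (simp add: hom_iff)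
  qed
  hence "isomorphic A M PP" unfolding isomorphic_def using u(1) by blast
  thus ?thesis unfolding iso_direct_sum_def using P PP_def F_M_C_def by blast
qed

end

context ab begin

lemma core_s: assumes SE: "short_exact A i d" and s: "s \<in> hom A (Cod A d) (Cod A i)"
  and ds: "d \<cdot> s = Id A (Cod A d)"
  shows "iso_direct_sum A (Cod A i) (Dom A i) (Cod A d)"
proof -
  define F M C where "F = Dom A i" "M = Cod A i" "C = Cod A d"
  note S = se[OF SE]
  have i: "i \<in> hom A F M" and d: "d \<in> hom A M C" using S F_M_C_def by simp_all
  have s': "s \<in> hom A C M" using s F_M_C_def by simp
  have ds': "d \<cdot> s = Id A C" using ds F_M_C_def by simp
  have obs: "F \<in> Ob A" "M \<in> Ob A" "C \<in> Ob A" using i d hom_ob1 hom_ob2 by blast+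
  have ms: "mono A s" using section_mono[OF section_I[OF s' d ds']] .
  obtain f0 where f0: "kernel A f0 s" using normal_mono[OF ms] by blast
  obtain c0 where c0: "cokernel A s c0" using cokernel_exists s' by (auto simp: hom_iff)
  define Z where "Z = Cod A c0"
  have c0h: "c0 \<in> hom A M Z" using cokernel_hom[OF c0] s' Z_def by (simp add: hom_iff)
  have f0h: "f0 \<in> hom A M (Cod A f0)" using ar_hom[OF kernel_ar[OF f0]] kernel_hom[OF f0] s'
    by (simp add: hom_iff)
  have fac: "\<exists>w \<in> hom A X C. s \<cdot> w = x" if x: "x \<in> hom A X M" and zx: "zero_mor A (c0 \<cdot> x)" for x X
  proof -
    obtain v where v: "v \<in> hom A Z (Cod A f0)" "v \<cdot> c0 = f0"
      using cokernel_fac[OF c0, of f0 "Cod A f0"] f0h s' kernel_zero[OF f0] Z_def by (auto simp: hom_iff)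
    have "f0 \<cdot> x = v \<cdot> (c0 \<cdot> x)" using assoc[OF x c0h v(1)] v by simp
    hence "zero_mor A (f0 \<cdot> x)" using zero_comp_l[OF zx, of v "Cod A f0"] v comp_hom[OF x c0h]
      by (simp add: hom_iff)
    thus ?thesis using kernel_fac[OF f0, of x X] x s' f0h by (auto simp: hom_iff)
  qed
  define \<alpha> where "\<alpha> = c0 \<cdot> i"
  have ah: "\<alpha> \<in> hom A F Z" using comp_hom[OF i c0h] \<alpha>_def by simp
  have "iso A \<alpha>"
  proof (rule iso0[OF ah])
    fix x X assume x: "x \<in> hom A X F" and z: "zero_mor A (\<alpha> \<cdot> x)"
    have ix: "i \<cdot> x \<in> hom A X M" using comp_hom[OF x i] .
    have "zero_mor A (c0 \<cdot> (i \<cdot> x))" using z assoc[OF x i c0h] \<alpha>_def by simp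
    then obtain w where w: "w \<in> hom A X C" "s \<cdot> w = i \<cdot> x" using fac ix by blast
    have "w = (d \<cdot> s) \<cdot> w" using ds' id_l[OF w(1)] by simp
    also have "\<dots> = (d \<cdot> i) \<cdot> x" using assoc[OF w(1) s' d] w(2) assoc[OF x i d] by simp
    finally have wdi: "w = (d \<cdot> i) \<cdot> x" .
    have "zero_mor A ((d \<cdot> i) \<cdot> x)" using zero_comp_r[OF kernel_zero[OF S(3)], of x X] x comp_hom[OF i d]
      by (simp add: hom_iff)
    hence "zero_mor A w" using wdi by simp
    hence "zero_mor A (i \<cdot> x)" using w(2) zero_comp_l[of w s M] w(1) s' by (simp add: hom_iff)
    thus "zero_mor A x" using mono_zero[OF S(1), of x X] x i by (simp add: hom_iff)
  next
    fix y Y assume y: "y \<in> hom A Z Y" and z: "zero_mor A (y \<cdot> \<alpha>)"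
    have yc: "y \<cdot> c0 \<in> hom A M Y" using comp_hom[OF c0h y] .
    have "zero_mor A ((y \<cdot> c0) \<cdot> i)" using z assoc[OF i c0h y] \<alpha>_def by simp
    then obtain h where h: "h \<in> hom A C Y" "h \<cdot> d = y \<cdot> c0"
      using cokernel_fac[OF S(4), of "y \<cdot> c0" Y] yc i d by (auto simp: hom_iff)
    have "h = h \<cdot> (d \<cdot> s)" using ds' id_r[OF h(1)] by simp
    also have "\<dots> = y \<cdot> (c0 \<cdot> s)" using assoc[OF s' d h(1)] h(2) assoc[OF s' c0h y] by simp
    finally have hy: "h = y \<cdot> (c0 \<cdot> s)" .
    have "zero_mor A (y \<cdot> (c0 \<cdot> s))" using zero_comp_l[OF cokernel_zero[OF c0], of y Y] y comp_hom[OF s' c0h]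
      by (simp add: hom_iff)
    hence "zero_mor A h" using hy by simp
    hence "zero_mor A (y \<cdot> c0)" using h(2) zero_comp_r[of h d M] h(1) d by (simp add: hom_iff)
    thus "zero_mor A y" using epi_zero[OF cokernel_epi[OF c0], of y Y] y c0h by (simp add: hom_iff)
  qed
  then obtain \<beta> where b: "\<beta> \<in> hom A Z F" "\<beta> \<cdot> \<alpha> = Id A F"
    using ah by (elim iso_E) (simp add: hom_iff)
  have rh: "\<beta> \<cdot> c0 \<in> hom A M F" using comp_hom[OF c0h b(1)] .
  have "(\<beta> \<cdot> c0) \<cdot> i = Id A F" using assoc[OF i c0h b(1)] b(2) \<alpha>_def by simp
  thus ?thesis using core_r[OF SE, of "\<beta> \<cdot> c0"] rh F_M_C_def by simp
qed

end

context ab begin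

lemma pbD: assumes "pullback A i g j f"
  shows "i \<in> Ar A" "g \<in> Ar A" "j \<in> Ar A" "f \<in> Ar A" "Cod A i = Cod A g" "Dom A j = Dom A f"
    "Cod A j = Dom A g" "Cod A f = Dom A i" "g \<cdot> j = i \<cdot> f"
  using assms unfolding pullback_def by auto

lemma pb_univ: assumes "pullback A i g j f" "x \<in> hom A X (Dom A g)" "y \<in> hom A X (Dom A i)" "g \<cdot> x = i \<cdot> y"
  shows "\<exists>!u. u \<in> hom A X (Dom A j) \<and> j \<cdot> u = x \<and> f \<cdot> u = y"
proof -
  have H: "\<forall>x\<in>Ar A. \<forall>y\<in>Ar A. Dom A x = Dom A y \<and> Cod A x = Dom A g \<and> Cod A y = Dom A i \<and>
        g \<cdot> x = i \<cdot> y \<longrightarrow> (\<exists>!u. u \<in> hom A (Dom A x) (Dom A j) \<and> j \<cdot> u = x \<and> f \<cdot> u = y)"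
    using assms(1) unfolding pullback_def by (elim conjE)
  show ?thesis using H[rule_format, of x y] assms(2-4) unfolding hom_iff by simp
qed

lemma pb_I: assumes "i \<in> Ar A" "g \<in> Ar A" "j \<in> Ar A" "f \<in> Ar A" "Cod A i = Cod A g" "Dom A j = Dom A f"
    "Cod A j = Dom A g" "Cod A f = Dom A i" "g \<cdot> j = i \<cdot> f"
  and U: "\<And>x y X. x \<in> hom A X (Dom A g) \<Longrightarrow> y \<in> hom A X (Dom A i) \<Longrightarrow> g \<cdot> x = i \<cdot> y \<Longrightarrow>
     \<exists>!u. u \<in> hom A X (Dom A j) \<and> j \<cdot> u = x \<and> f \<cdot> u = y"
  shows "pullback A i g j f"
  unfolding pullback_def
proof (intro conjI ballI impI)
  fix x y assume "x \<in> Ar A" "y \<in> Ar A" and h: "Dom A x = Dom A y \<and> Cod A x = Dom A g \<and> Cod A y = Dom A i \<and> g \<cdot> x = i \<cdot> y"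
  thus "\<exists>!u. u \<in> hom A (Dom A x) (Dom A j) \<and> j \<cdot> u = x \<and> f \<cdot> u = y"
    using U[of x "Dom A x" y] by (simp add: hom_iff)
qed (use assms in auto)

lemma kernel_I: assumes "f \<in> Ar A" "k \<in> Ar A" "Cod A k = Dom A f" "zero_mor A (f \<cdot> k)"
  and U: "\<And>x X. x \<in> hom A X (Dom A f) \<Longrightarrow> zero_mor A (f \<cdot> x) \<Longrightarrow>
     \<exists>!u. u \<in> hom A X (Dom A k) \<and> k \<cdot> u = x"
  shows "kernel A f k"
  unfolding kernel_def
proof (intro conjI ballI impI)
  fix x assume "x \<in> Ar A" and h: "Cod A x = Dom A f \<and> zero_mor A (f \<cdot> x)"
  thus "\<exists>!u. u \<in> hom A (Dom A x) (Dom A k) \<and> k \<cdot> u = x"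
    using U[of x "Dom A x"] by (simp add: hom_iff)
qed (use assms in auto)

lemma fi_D: assumes "fully_invariant A k" "h \<in> hom A (Cod A k) (Cod A k)"
  obtains \<alpha> where "\<alpha> \<in> hom A (Dom A k) (Dom A k)" "h \<cdot> k = k \<cdot> \<alpha>"
  using assms unfolding fully_invariant_def by blast

lemma fi_mono: "fully_invariant A k \<Longrightarrow> mono A k"
  unfolding fully_invariant_def by (elim conjE)

lemma fi_I: assumes "mono A k"
  and "\<And>h. h \<in> hom A (Cod A k) (Cod A k) \<Longrightarrow> \<exists>\<alpha>\<in>hom A (Dom A k) (Dom A k). h \<cdot> k = k \<cdot> \<alpha>"
  shows "fully_invariant A k"
  unfolding fully_invariant_def using assms by blast

lemma section_E: assumes "is_section A s"
  obtains t where "t \<in> hom A (Cod A s) (Dom A s)" "t \<cdot> s = Id A (Dom A s)"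
  using assms unfolding is_section_def by (elim conjE bexE) (rule that)

lemma sec_comp: assumes j: "sec_st A st j" and l: "sec_st A st l" and c: "Cod A l = Dom A j"
  shows "sec_st A st (j \<cdot> l)"
proof -
  have sj: "is_section A j" and sl: "is_section A l" using j l by (simp_all add: sec_st_def)
  have mj: "mono A j" and ml: "mono A l" using section_mono sj sl by blast+
  have jh: "j \<in> hom A (Dom A j) (Cod A j)" and lh: "l \<in> hom A (Dom A l) (Dom A j)"
    using mono_hom[OF mj] mono_hom[OF ml] c by simp_all
  have jl: "j \<cdot> l \<in> hom A (Dom A l) (Cod A j)" using comp_hom[OF lh jh] .
  obtain t where t: "t \<in> hom A (Cod A j) (Dom A j)" "t \<cdot> j = Id A (Dom A j)" using sj by (rule section_E)
  obtain t' where t': "t' \<in> hom A (Cod A l) (Dom A l)" "t' \<cdot> l = Id A (Dom A l)" using sl by (rule section_E)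
  have t'': "t' \<in> hom A (Dom A j) (Dom A l)" using t' c by simp
  have tt: "t' \<cdot> t \<in> hom A (Cod A j) (Dom A l)" using comp_hom[OF t(1) t''] .
  have "(t' \<cdot> t) \<cdot> (j \<cdot> l) = t' \<cdot> ((t \<cdot> j) \<cdot> l)"
    using assoc[OF jl t(1) t''] assoc[OF lh jh t(1)] by simp
  also have "\<dots> = Id A (Dom A l)" using t(2) id_l[OF lh] t'(2) by simp
  finally have sec: "is_section A (j \<cdot> l)" using section_I[OF jl tt] by simp
  moreover have "st \<longrightarrow> fully_invariant A (j \<cdot> l)"
  proof
    assume st
    hence fj: "fully_invariant A j" and fl: "fully_invariant A l" using j l by (simp_all add: sec_st_def)
    show "fully_invariant A (j \<cdot> l)"
    proof (rule fi_I)
      show "mono A (j \<cdot> l)" using mono_comp[OF mj ml] c by simp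
      fix h assume h0: "h \<in> hom A (Cod A (j \<cdot> l)) (Cod A (j \<cdot> l))"
      have h: "h \<in> hom A (Cod A j) (Cod A j)" using h0 jl by (simp add: hom_iff)
      obtain \<alpha> where a: "\<alpha> \<in> hom A (Dom A j) (Dom A j)" "h \<cdot> j = j \<cdot> \<alpha>" using fi_D[OF fj h] by blast
      obtain \<beta> where b: "\<beta> \<in> hom A (Dom A l) (Dom A l)" "\<alpha> \<cdot> l = l \<cdot> \<beta>" using fi_D[OF fl, of \<alpha>] a c by auto
      have "h \<cdot> (j \<cdot> l) = (j \<cdot> \<alpha>) \<cdot> l" using assoc[OF lh jh h] a by simp
      also have "\<dots> = j \<cdot> (l \<cdot> \<beta>)" using assoc[OF lh a(1) jh] b by simp
      also have "\<dots> = (j \<cdot> l) \<cdot> \<beta>" using assoc[OF b(1) lh jh] by simp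
      finally show "\<exists>\<beta>\<in>hom A (Dom A (j \<cdot> l)) (Dom A (j \<cdot> l)). h \<cdot> (j \<cdot> l) = (j \<cdot> l) \<cdot> \<beta>"
        using b(1) jl by (auto simp: hom_iff)
    qed
  qed
  ultimately show ?thesis by (simp add: sec_st_def)
qed

lemma pb_exists: assumes SE: "short_exact A i d" and g: "g \<in> hom A (Cod A i) (Cod A i)"
  shows "\<exists>j f. pullback A i g j f"
proof -
  define F M C where "F = Dom A i" "M = Cod A i" "C = Cod A d"
  note S = se[OF SE]
  have i: "i \<in> hom A F M" and d: "d \<in> hom A M C" using S F_M_C_def by simp_all
  have g': "g \<in> hom A M M" using g F_M_C_def by simp
  have dg: "d \<cdot> g \<in> hom A M C" using comp_hom[OF g' d] .
  obtain j where kj: "kernel A (d \<cdot> g) j" using kernel_exists dg by (auto simp: hom_iff)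
  define PP where "PP = Dom A j"
  have j: "j \<in> hom A PP M" using kernel_hom[OF kj] dg PP_def by (simp add: hom_iff)
  have gj: "g \<cdot> j \<in> hom A PP M" using comp_hom[OF j g'] .
  have "zero_mor A (d \<cdot> (g \<cdot> j))" using kernel_zero[OF kj] assoc[OF j g' d] by simp
  then obtain f where f: "f \<in> hom A PP F" "i \<cdot> f = g \<cdot> j"
    using kernel_fac[OF S(3), of "g \<cdot> j" PP] gj i d by (auto simp: hom_iff)
  have "pullback A i g j f"
  proof (rule pb_I)
    show "i \<in> Ar A" "g \<in> Ar A" "j \<in> Ar A" "f \<in> Ar A" "Cod A i = Cod A g" "Dom A j = Dom A f"
      "Cod A j = Dom A g" "Cod A f = Dom A i" "g \<cdot> j = i \<cdot> f"
      using i g' j f F_M_C_def PP_def by (auto simp: hom_iff)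
    fix x y X assume x0: "x \<in> hom A X (Dom A g)" and y0: "y \<in> hom A X (Dom A i)" and e: "g \<cdot> x = i \<cdot> y"
    have x: "x \<in> hom A X M" and y: "y \<in> hom A X F" using x0 y0 g' F_M_C_def by (simp_all add: hom_iff)
    have "(d \<cdot> g) \<cdot> x = (d \<cdot> i) \<cdot> y" using assoc[OF x g' d] e assoc[OF y i d] by simp
    moreover have "zero_mor A ((d \<cdot> i) \<cdot> y)" using zero_comp_r[OF kernel_zero[OF S(3)], of y X] y comp_hom[OF i d]
      by (simp add: hom_iff)
    ultimately have zx: "zero_mor A ((d \<cdot> g) \<cdot> x)" by simp
    have U: "\<exists>!u. u \<in> hom A X (Dom A j) \<and> j \<cdot> u = x"
      using kernel_uniq[OF kj, of x X] x zx dg by (simp add: hom_iff)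
    then obtain u where u: "u \<in> hom A X PP" "j \<cdot> u = x" using PP_def by auto
    have fu: "f \<cdot> u = y"
    proof -
      have "i \<cdot> (f \<cdot> u) = (g \<cdot> j) \<cdot> u" using assoc[OF u(1) f(1) i] f by simp
      also have "\<dots> = i \<cdot> y" using assoc[OF u(1) j g'] u e by simp
      finally show ?thesis using monoD[OF S(1), of "f \<cdot> u" X y] comp_hom[OF u(1) f(1)] y F_M_C_def by simp
    qed
    show "\<exists>!u. u \<in> hom A X (Dom A j) \<and> j \<cdot> u = x \<and> f \<cdot> u = y"
    proof (rule ex1I[of _ u])
      show "u \<in> hom A X (Dom A j) \<and> j \<cdot> u = x \<and> f \<cdot> u = y" using u fu PP_def by simp
      fix v assume "v \<in> hom A X (Dom A j) \<and> j \<cdot> v = x \<and> f \<cdot> v = y"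
      thus "v = u" using U u PP_def by (elim ex1E) metis
    qed
  qed
  thus ?thesis by blast
qed

lemma part1_fwd: assumes SE: "short_exact A i d" and SF: "self_F_split A st i"
  and KC: "kernel_comparison_sections A st i"
  shows "self_rickart A st (Cod A i) \<and> iso_direct_sum A (Cod A i) (Dom A i) (Cod A d)"
proof
  define F M C where "F = Dom A i" "M = Cod A i" "C = Cod A d"
  note S = se[OF SE]
  have i: "i \<in> hom A F M" and d: "d \<in> hom A M C" using S F_M_C_def by simp_all
  have obs: "F \<in> Ob A" "M \<in> Ob A" "C \<in> Ob A" using i d hom_ob1 hom_ob2 by blast+
  show "self_rickart A st (Cod A i)"
    unfolding self_rickart_def
  proof (intro ballI allI impI)
    fix g k assume g: "g \<in> hom A (Cod A i) (Cod A i)" and k: "kernel A g k"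
    obtain j f where pb: "pullback A i g j f" using pb_exists[OF SE g] by blast
    have sj: "sec_st A st j" using SF pb g unfolding self_F_split_def by blast
    have g': "g \<in> hom A M M" using g F_M_C_def by simp
    define K where "K = Dom A k"
    have kh: "k \<in> hom A K M" using kernel_hom[OF k] g' K_def by (simp add: hom_iff)
    note z = zm[OF hom_ob1[OF kh] obs(1)]
    have "zero_mor A (i \<cdot> zm K F)" using zero_comp_l[OF z(2), of i M] z(1) i by (simp add: hom_iff)
    hence e: "g \<cdot> k = i \<cdot> zm K F" using zero_unique[OF kernel_zero[OF k]] comp_hom[OF kh g'] comp_hom[OF z(1) i]
      by (simp add: hom_iff)
    obtain l where l: "l \<in> hom A K (Dom A j)" "j \<cdot> l = k"
      using pb_univ[OF pb, of k K "zm K F"] kh z(1) g' i e F_M_C_def by (auto simp: hom_iff)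
    have "sec_st A st l" using KC g pb k l K_def unfolding kernel_comparison_sections_def by blast
    hence "sec_st A st (j \<cdot> l)" using sec_comp[OF sj, of l] l by (simp add: hom_iff)
    thus "sec_st A st k" using l(2) by simp
  qed
  have iM: "Id A M \<in> hom A M M" and iF: "Id A F \<in> hom A F F" using id_hom obs by blast+
  have "pullback A i (Id A M) i (Id A F)"
  proof (rule pb_I)
    show "i \<in> Ar A" "Id A M \<in> Ar A" "i \<in> Ar A" "Id A F \<in> Ar A" "Cod A i = Cod A (Id A M)" "Dom A i = Dom A (Id A F)"
      "Cod A i = Dom A (Id A M)" "Cod A (Id A F) = Dom A i" "Id A M \<cdot> i = i \<cdot> Id A F"
      using i iM iF id_l[OF i] id_r[OF i] by (auto simp: hom_iff)
    fix x y X assume x0: "x \<in> hom A X (Dom A (Id A M))" and y0: "y \<in> hom A X (Dom A i)" and e: "Id A M \<cdot> x = i \<cdot> y"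
    have x: "x \<in> hom A X M" and y: "y \<in> hom A X F" using x0 y0 iM F_M_C_def by (simp_all add: hom_iff)
    have e': "i \<cdot> y = x" using e id_l[OF x] by simp
    show "\<exists>!u. u \<in> hom A X (Dom A i) \<and> i \<cdot> u = x \<and> Id A F \<cdot> u = y"
    proof (rule ex1I[of _ y])
      show "y \<in> hom A X (Dom A i) \<and> i \<cdot> y = x \<and> Id A F \<cdot> y = y" using y e' id_l[OF y] F_M_C_def by simp
      fix v assume "v \<in> hom A X (Dom A i) \<and> i \<cdot> v = x \<and> Id A F \<cdot> v = y"
      thus "v = y" using id_l[of v X F] F_M_C_def by simp
    qed
  qed
  hence "sec_st A st i" using SF iM F_M_C_def unfolding self_F_split_def by blast
  hence "is_section A i" by (simp add: sec_st_def)
  then obtain r where r: "r \<in> hom A (Cod A i) (Dom A i)" "r \<cdot> i = Id A (Dom A i)" by (rule section_E)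
  show "iso_direct_sum A (Cod A i) (Dom A i) (Cod A d)" using core_r[OF SE r] .
qed

end

context ab begin

lemma ds_mono: assumes DS: "iso_direct_sum A M F C" and M: "M \<in> Ob A"
  shows "\<exists>\<sigma>. \<sigma> \<in> hom A C M \<and> mono A \<sigma>"
proof -
  obtain p1 p2 \<phi> where P: "product A p1 p2" "Cod A p1 = F" "Cod A p2 = C" and ph: "\<phi> \<in> hom A M (Dom A p1)"
    and iso: "iso A \<phi>"
    using DS unfolding iso_direct_sum_def isomorphic_def by blast
  define PP where "PP = Dom A p1"
  have p: "p1 \<in> hom A PP F" "p2 \<in> hom A PP C" using prod_hom[OF P(1)] P PP_def by simp_all
  obtain \<psi> where ps: "\<psi> \<in> hom A PP M" "\<phi> \<cdot> \<psi> = Id A PP"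
    using iso ph PP_def by (elim iso_E) (auto simp: hom_iff)
  have obs: "F \<in> Ob A" "C \<in> Ob A" using p hom_ob2 by blast+
  note zCF = zm[OF obs(2) obs(1)]
  have iC: "Id A C \<in> hom A C C" using id_hom obs by blast
  obtain \<iota>2 where i2: "\<iota>2 \<in> hom A C PP" "p2 \<cdot> \<iota>2 = Id A C"
    using prod_ex[OF P(1), of "zm C F" C "Id A C"] iC zCF P PP_def by auto
  have m1: "mono A \<psi>" using section_mono[OF section_I[OF ps(1) ph[folded PP_def] ps(2)]] .
  have m2: "mono A \<iota>2" using section_mono[OF section_I[OF i2(1) p(2) i2(2)]] .
  have "mono A (\<psi> \<cdot> \<iota>2)" using mono_comp[OF m1 m2] i2(1) ps(1) by (simp add: hom_iff)
  moreover have "\<psi> \<cdot> \<iota>2 \<in> hom A C M" using comp_hom[OF i2(1) ps(1)] .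
  ultimately show ?thesis by blast
qed

lemma part1_bwd: assumes SE: "short_exact A i d" and SR: "self_rickart A st (Cod A i)"
  and DS: "iso_direct_sum A (Cod A i) (Dom A i) (Cod A d)"
  shows "self_F_split A st i \<and> kernel_comparison_sections A st i"
proof -
  define F M C where "F = Dom A i" "M = Cod A i" "C = Cod A d"
  note S = se[OF SE]
  have i: "i \<in> hom A F M" and d: "d \<in> hom A M C" using S F_M_C_def by simp_all
  have obs: "F \<in> Ob A" "M \<in> Ob A" "C \<in> Ob A" using i d hom_ob1 hom_ob2 by blast+
  obtain \<sigma> where sg: "\<sigma> \<in> hom A C M" "mono A \<sigma>" using ds_mono[OF DS] obs F_M_C_def by auto
  have kerj: "kernel A (\<sigma> \<cdot> (d \<cdot> g)) j \<and> sec_st A st j"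
    if g: "g \<in> hom A M M" and pb: "pullback A i g j f" for g j f
  proof -
    note P = pbD[OF pb]
    define PP where "PP = Dom A j"
    have j: "j \<in> hom A PP M" and f: "f \<in> hom A PP F" using P g F_M_C_def PP_def by (auto simp: hom_iff)
    have dg: "d \<cdot> g \<in> hom A M C" using comp_hom[OF g d] .
    have e: "\<sigma> \<cdot> (d \<cdot> g) \<in> hom A M M" using comp_hom[OF dg sg(1)] .
    have "kernel A (\<sigma> \<cdot> (d \<cdot> g)) j"
    proof (rule kernel_I)
      show "\<sigma> \<cdot> (d \<cdot> g) \<in> Ar A" "j \<in> Ar A" "Cod A j = Dom A (\<sigma> \<cdot> (d \<cdot> g))" using e j by (auto simp: hom_iff)
      have "\<sigma> \<cdot> (d \<cdot> g) \<cdot> j = \<sigma> \<cdot> ((d \<cdot> i) \<cdot> f)"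
        using assoc[OF j dg sg(1)] assoc[OF j g d] P(9) assoc[OF f i d] by simp
      moreover have "zero_mor A (\<sigma> \<cdot> ((d \<cdot> i) \<cdot> f))"
        using zero_comp_l[OF zero_comp_r[OF kernel_zero[OF S(3)], of f PP], of \<sigma> M] f sg(1) comp_hom[OF i d]
          comp_hom[OF f comp_hom[OF i d]] by (simp add: hom_iff)
      ultimately show "zero_mor A (\<sigma> \<cdot> (d \<cdot> g) \<cdot> j)" by simp
      fix x X assume x0: "x \<in> hom A X (Dom A (\<sigma> \<cdot> (d \<cdot> g)))" and zx: "zero_mor A (\<sigma> \<cdot> (d \<cdot> g) \<cdot> x)"
      have x: "x \<in> hom A X M" using x0 e by (simp add: hom_iff)
      have gx: "g \<cdot> x \<in> hom A X M" using comp_hom[OF x g] .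
      have "zero_mor A (\<sigma> \<cdot> (d \<cdot> (g \<cdot> x)))" using zx assoc[OF x dg sg(1)] assoc[OF x g d] by simp
      hence "zero_mor A (d \<cdot> (g \<cdot> x))" using mono_zero[OF sg(2), of "d \<cdot> (g \<cdot> x)" X] comp_hom[OF gx d] sg(1)
        by (simp add: hom_iff)
      then obtain y where y: "y \<in> hom A X F" "i \<cdot> y = g \<cdot> x"
        using kernel_fac[OF S(3), of "g \<cdot> x" X] gx d i by (auto simp: hom_iff)
      have U: "\<exists>!u. u \<in> hom A X (Dom A j) \<and> j \<cdot> u = x \<and> f \<cdot> u = y"
        using pb_univ[OF pb, of x X y] x y g i by (simp add: hom_iff)
      then obtain u where u: "u \<in> hom A X PP" "j \<cdot> u = x" "f \<cdot> u = y" using PP_def by auto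
      show "\<exists>!u. u \<in> hom A X (Dom A j) \<and> j \<cdot> u = x"
      proof (rule ex1I[of _ u])
        show "u \<in> hom A X (Dom A j) \<and> j \<cdot> u = x" using u PP_def by simp
        fix v assume v: "v \<in> hom A X (Dom A j) \<and> j \<cdot> v = x"
        hence v1: "v \<in> hom A X PP" using PP_def by simp
        have "i \<cdot> (f \<cdot> v) = (g \<cdot> j) \<cdot> v" using assoc[OF v1 f i] P(9) by simp
        also have "\<dots> = i \<cdot> y" using assoc[OF v1 j g] v y by simp
        finally have "f \<cdot> v = y" using monoD[OF S(1), of "f \<cdot> v" X y] comp_hom[OF v1 f] y F_M_C_def by simp
        thus "v = u" using U u v PP_def by (elim ex1E) metis
      qed
    qed
    moreover have "sec_st A st j" using SR calculation e F_M_C_def unfolding self_rickart_def by blast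
    ultimately show ?thesis by simp
  qed
  have SF: "self_F_split A st i" unfolding self_F_split_def
    using kerj F_M_C_def by blast
  have KC: "kernel_comparison_sections A st i" unfolding kernel_comparison_sections_def
  proof (intro ballI allI impI, elim conjE)
    fix g j f k l assume g0: "g \<in> hom A (Cod A i) (Cod A i)" and pb: "pullback A i g j f"
      and k: "kernel A g k" and l0: "l \<in> hom A (Dom A k) (Dom A j)" and jl: "j \<cdot> l = k"
    have g: "g \<in> hom A M M" using g0 F_M_C_def by simp
    note P = pbD[OF pb]
    define PP where "PP = Dom A j"
    define K where "K = Dom A k"
    have j: "j \<in> hom A PP M" using P g F_M_C_def PP_def by (auto simp: hom_iff)
    have l: "l \<in> hom A K PP" using l0 K_def PP_def by simp
    have sj: "sec_st A st j" using kerj[OF g pb] by simp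
    have sk: "sec_st A st k" using SR g0 k unfolding self_rickart_def by blast
    obtain tj where tj: "tj \<in> hom A M PP" "tj \<cdot> j = Id A PP"
      using sj j PP_def by (auto simp: sec_st_def hom_iff elim: section_E)
    have kh: "k \<in> hom A K M" using jl comp_hom[OF l j] by simp
    obtain tk where tk: "tk \<in> hom A M K" "tk \<cdot> k = Id A K"
      using sk kh K_def by (auto simp: sec_st_def hom_iff elim: section_E)
    have tkj: "tk \<cdot> j \<in> hom A PP K" using comp_hom[OF j tk(1)] .
    have "(tk \<cdot> j) \<cdot> l = Id A K" using assoc[OF l j tk(1)] jl tk by simp
    hence secl: "is_section A l" using section_I[OF l tkj] by simp
    moreover have "st \<longrightarrow> fully_invariant A l"
    proof
      assume st
      hence fk: "fully_invariant A k" using sk by (simp add: sec_st_def)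
      have mj: "mono A j" using sj by (simp add: sec_st_def section_mono)
      show "fully_invariant A l"
      proof (rule fi_I)
        show "mono A l" using section_mono[OF secl] .
        fix h assume h0: "h \<in> hom A (Cod A l) (Cod A l)"
        have h: "h \<in> hom A PP PP" using h0 l by (simp add: hom_iff)
        have H: "j \<cdot> (h \<cdot> tj) \<in> hom A M M" using comp_hom[OF comp_hom[OF tj(1) h] j] .
        obtain \<beta> where b: "\<beta> \<in> hom A K K" "(j \<cdot> (h \<cdot> tj)) \<cdot> k = k \<cdot> \<beta>"
          using fi_D[OF fk, of "j \<cdot> (h \<cdot> tj)"] H kh K_def by (auto simp: hom_iff)
        have "(j \<cdot> (h \<cdot> tj)) \<cdot> k = j \<cdot> (h \<cdot> ((tj \<cdot> j) \<cdot> l))"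
          using jl[symmetric] assoc[OF l j comp_hom[OF tj(1) h]] assoc[OF comp_hom[OF l j] tj(1) h]
            assoc[OF comp_hom[OF l j] comp_hom[OF tj(1) h] j] assoc[OF l j tj(1)] by simp
        also have "\<dots> = j \<cdot> (h \<cdot> l)" using tj(2) id_l[OF l] by simp
        finally have "j \<cdot> (h \<cdot> l) = j \<cdot> (l \<cdot> \<beta>)" using b(2) jl assoc[OF b(1) l j] by simp
        hence "h \<cdot> l = l \<cdot> \<beta>" using monoD[OF mj, of "h \<cdot> l" K "l \<cdot> \<beta>"] comp_hom[OF l h] comp_hom[OF b(1) l]
          PP_def by simp
        thus "\<exists>\<alpha>\<in>hom A (Dom A l) (Dom A l). h \<cdot> l = l \<cdot> \<alpha>" using b(1) l by (auto simp: hom_iff)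
      qed
    qed
    ultimately show "sec_st A st l" by (simp add: sec_st_def)
  qed
  show ?thesis using SF KC by simp
qed

end

context ab begin

lemma poD: assumes "pushout A d g p h"
  shows "d \<in> Ar A" "g \<in> Ar A" "p \<in> Ar A" "h \<in> Ar A" "Dom A d = Dom A g" "Cod A p = Cod A h"
    "Dom A p = Cod A g" "Dom A h = Cod A d" "p \<cdot> g = h \<cdot> d"
  using assms unfolding pushout_def by auto

lemma po_univ: assumes "pushout A d g p h" "x \<in> hom A (Cod A g) Y" "y \<in> hom A (Cod A d) Y" "x \<cdot> g = y \<cdot> d"
  shows "\<exists>!u. u \<in> hom A (Cod A p) Y \<and> u \<cdot> p = x \<and> u \<cdot> h = y"
proof -
  have H: "\<forall>x\<in>Ar A. \<forall>y\<in>Ar A. Cod A x = Cod A y \<and> Dom A x = Cod A g \<and> Dom A y = Cod A d \<and>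
        x \<cdot> g = y \<cdot> d \<longrightarrow> (\<exists>!u. u \<in> hom A (Cod A p) (Cod A x) \<and> u \<cdot> p = x \<and> u \<cdot> h = y)"
    using assms(1) unfolding pushout_def by (elim conjE)
  show ?thesis using H[rule_format, of x y] assms(2-4) unfolding hom_iff by simp
qed

lemma po_I: assumes "d \<in> Ar A" "g \<in> Ar A" "p \<in> Ar A" "h \<in> Ar A" "Dom A d = Dom A g" "Cod A p = Cod A h"
    "Dom A p = Cod A g" "Dom A h = Cod A d" "p \<cdot> g = h \<cdot> d"
  and U: "\<And>x y Y. x \<in> hom A (Cod A g) Y \<Longrightarrow> y \<in> hom A (Cod A d) Y \<Longrightarrow> x \<cdot> g = y \<cdot> d \<Longrightarrow>
     \<exists>!u. u \<in> hom A (Cod A p) Y \<and> u \<cdot> p = x \<and> u \<cdot> h = y"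
  shows "pushout A d g p h"
  unfolding pushout_def
proof (intro conjI ballI impI)
  fix x y assume "x \<in> Ar A" "y \<in> Ar A" and hh: "Cod A x = Cod A y \<and> Dom A x = Cod A g \<and> Dom A y = Cod A d \<and> x \<cdot> g = y \<cdot> d"
  thus "\<exists>!u. u \<in> hom A (Cod A p) (Cod A x) \<and> u \<cdot> p = x \<and> u \<cdot> h = y"
    using U[of x "Cod A x" y] by (simp add: hom_iff)
qed (use assms in auto)

lemma cokernel_I: assumes "f \<in> Ar A" "c \<in> Ar A" "Dom A c = Cod A f" "zero_mor A (c \<cdot> f)"
  and U: "\<And>x Y. x \<in> hom A (Cod A f) Y \<Longrightarrow> zero_mor A (x \<cdot> f) \<Longrightarrow>
     \<exists>!u. u \<in> hom A (Cod A c) Y \<and> u \<cdot> c = x"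
  shows "cokernel A f c"
  unfolding cokernel_def
proof (intro conjI ballI impI)
  fix x assume "x \<in> Ar A" and hh: "Dom A x = Cod A f \<and> zero_mor A (x \<cdot> f)"
  thus "\<exists>!u. u \<in> hom A (Cod A c) (Cod A x) \<and> u \<cdot> c = x"
    using U[of x "Cod A x"] by (simp add: hom_iff)
qed (use assms in auto)

lemma fc_D: assumes "fully_coinvariant A k" "h \<in> hom A (Dom A k) (Dom A k)"
  obtains \<beta> where "\<beta> \<in> hom A (Cod A k) (Cod A k)" "k \<cdot> h = \<beta> \<cdot> k"
  using assms unfolding fully_coinvariant_def by blast

lemma fc_I: assumes "epi A k"
  and "\<And>h. h \<in> hom A (Dom A k) (Dom A k) \<Longrightarrow> \<exists>\<beta>\<in>hom A (Cod A k) (Cod A k). k \<cdot> h = \<beta> \<cdot> k"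
  shows "fully_coinvariant A k"
  unfolding fully_coinvariant_def using assms by blast

lemma retraction_E: assumes "is_retraction A s"
  obtains t where "t \<in> hom A (Cod A s) (Dom A s)" "s \<cdot> t = Id A (Cod A s)"
  using assms unfolding is_retraction_def by (elim conjE bexE) (rule that)

lemma ret_comp: assumes q: "ret_st A st q" and p: "ret_st A st p" and c: "Cod A p = Dom A q"
  shows "ret_st A st (q \<cdot> p)"
proof -
  have sq: "is_retraction A q" and sp: "is_retraction A p" using q p by (simp_all add: ret_st_def)
  have mq: "epi A q" and mp: "epi A p" using retraction_epi sq sp by blast+
  have qh: "q \<in> hom A (Cod A p) (Cod A q)" and ph: "p \<in> hom A (Dom A p) (Cod A p)"
    using epi_hom[OF mq] epi_hom[OF mp] c by simp_all
  have qp: "q \<cdot> p \<in> hom A (Dom A p) (Cod A q)" using comp_hom[OF ph qh] .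
  obtain t where t: "t \<in> hom A (Cod A q) (Cod A p)" "q \<cdot> t = Id A (Cod A q)" using sq c by (auto elim: retraction_E)
  obtain t' where t': "t' \<in> hom A (Cod A p) (Dom A p)" "p \<cdot> t' = Id A (Cod A p)" using sp by (rule retraction_E)
  have tt: "t' \<cdot> t \<in> hom A (Cod A q) (Dom A p)" using comp_hom[OF t(1) t'(1)] .
  have "(q \<cdot> p) \<cdot> (t' \<cdot> t) = q \<cdot> ((p \<cdot> t') \<cdot> t)"
    using assoc[OF tt ph qh] assoc[OF t(1) t'(1) ph] by simp
  also have "\<dots> = Id A (Cod A q)" using t(2) id_l[OF t(1)] t'(2) by simp
  finally have ret: "is_retraction A (q \<cdot> p)" using retraction_I[OF qp tt] by simp
  moreover have "st \<longrightarrow> fully_coinvariant A (q \<cdot> p)"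
  proof
    assume st
    hence fq: "fully_coinvariant A q" and fp: "fully_coinvariant A p" using q p by (simp_all add: ret_st_def)
    show "fully_coinvariant A (q \<cdot> p)"
    proof (rule fc_I)
      show "epi A (q \<cdot> p)" using epi_comp[OF mq mp] c by simp
      fix h assume h0: "h \<in> hom A (Dom A (q \<cdot> p)) (Dom A (q \<cdot> p))"
      have h: "h \<in> hom A (Dom A p) (Dom A p)" using h0 qp by (simp add: hom_iff)
      obtain \<alpha> where a: "\<alpha> \<in> hom A (Cod A p) (Cod A p)" "p \<cdot> h = \<alpha> \<cdot> p" using fc_D[OF fp h] by blast
      obtain \<beta> where b: "\<beta> \<in> hom A (Cod A q) (Cod A q)" "q \<cdot> \<alpha> = \<beta> \<cdot> q" using fc_D[OF fq, of \<alpha>] a c by auto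
      have "(q \<cdot> p) \<cdot> h = q \<cdot> (\<alpha> \<cdot> p)" using assoc[OF h ph qh] a by simp
      also have "\<dots> = (\<beta> \<cdot> q) \<cdot> p" using assoc[OF ph a(1) qh] b by simp
      also have "\<dots> = \<beta> \<cdot> (q \<cdot> p)" using assoc[OF ph qh b(1)] by simp
      finally show "\<exists>\<beta>\<in>hom A (Cod A (q \<cdot> p)) (Cod A (q \<cdot> p)). q \<cdot> p \<cdot> h = \<beta> \<cdot> (q \<cdot> p)"
        using b(1) qp by (auto simp: hom_iff)
    qed
  qed
  ultimately show ?thesis by (simp add: ret_st_def)
qed

lemma po_exists: assumes SE: "short_exact A i d" and g: "g \<in> hom A (Dom A d) (Dom A d)"
  shows "\<exists>p h. pushout A d g p h \<and> cokernel A (g \<cdot> i) p"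
proof -
  define F M C where "F = Dom A i" "M = Cod A i" "C = Cod A d"
  note S = se[OF SE]
  have i: "i \<in> hom A F M" and d: "d \<in> hom A M C" using S F_M_C_def by simp_all
  have g': "g \<in> hom A M M" using g d by (simp add: hom_iff)
  have gi: "g \<cdot> i \<in> hom A F M" using comp_hom[OF i g'] .
  obtain p where cp: "cokernel A (g \<cdot> i) p" using cokernel_exists gi by (auto simp: hom_iff)
  define Q where "Q = Cod A p"
  have p: "p \<in> hom A M Q" using cokernel_hom[OF cp] gi Q_def by (simp add: hom_iff)
  have pg: "p \<cdot> g \<in> hom A M Q" using comp_hom[OF g' p] .
  have "zero_mor A ((p \<cdot> g) \<cdot> i)" using cokernel_zero[OF cp] assoc[OF i g' p] by simp
  then obtain h where h: "h \<in> hom A C Q" "h \<cdot> d = p \<cdot> g"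
    using cokernel_fac[OF S(4), of "p \<cdot> g" Q] pg i d by (auto simp: hom_iff)
  have "pushout A d g p h"
  proof (rule po_I)
    show "d \<in> Ar A" "g \<in> Ar A" "p \<in> Ar A" "h \<in> Ar A" "Dom A d = Dom A g" "Cod A p = Cod A h"
      "Dom A p = Cod A g" "Dom A h = Cod A d" "p \<cdot> g = h \<cdot> d"
      using d g' p h F_M_C_def Q_def by (auto simp: hom_iff)
    fix x y Y assume x0: "x \<in> hom A (Cod A g) Y" and y0: "y \<in> hom A (Cod A d) Y" and e: "x \<cdot> g = y \<cdot> d"
    have x: "x \<in> hom A M Y" and y: "y \<in> hom A C Y" using x0 y0 g' F_M_C_def by (simp_all add: hom_iff)
    have "x \<cdot> (g \<cdot> i) = y \<cdot> (d \<cdot> i)" using assoc[OF i g' x] e assoc[OF i d y] by simp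
    moreover have "zero_mor A (y \<cdot> (d \<cdot> i))" using zero_comp_l[OF kernel_zero[OF S(3)], of y Y] y comp_hom[OF i d]
      by (simp add: hom_iff)
    ultimately have zx: "zero_mor A (x \<cdot> (g \<cdot> i))" by simp
    have U: "\<exists>!u. u \<in> hom A (Cod A p) Y \<and> u \<cdot> p = x"
      using cokernel_uniq[OF cp, of x Y] x zx gi by (simp add: hom_iff)
    then obtain u where u: "u \<in> hom A Q Y" "u \<cdot> p = x" using Q_def by auto
    have uh: "u \<cdot> h = y"
    proof -
      have "(u \<cdot> h) \<cdot> d = u \<cdot> (p \<cdot> g)" using assoc[OF d h(1) u(1)] h by simp
      also have "\<dots> = y \<cdot> d" using assoc[OF g' p u(1)] u e by simp
      finally show ?thesis using epiD[OF S(2), of "u \<cdot> h" Y y] comp_hom[OF h(1) u(1)] y d by (simp add: hom_iff)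
    qed
    show "\<exists>!u. u \<in> hom A (Cod A p) Y \<and> u \<cdot> p = x \<and> u \<cdot> h = y"
    proof (rule ex1I[of _ u])
      show "u \<in> hom A (Cod A p) Y \<and> u \<cdot> p = x \<and> u \<cdot> h = y" using u uh Q_def by simp
      fix v assume "v \<in> hom A (Cod A p) Y \<and> v \<cdot> p = x \<and> v \<cdot> h = y"
      thus "v = u" using U u Q_def by (elim ex1E) metis
    qed
  qed
  thus ?thesis using cp by blast
qed

lemma part2_fwd: assumes SE: "short_exact A i d" and SF: "dual_self_F_split A st d"
  and KC: "cokernel_comparison_retractions A st d"
  shows "dual_self_rickart A st (Dom A d) \<and> iso_direct_sum A (Dom A d) (Dom A i) (Cod A d)"
proof
  define F M C where "F = Dom A i" "M = Cod A i" "C = Cod A d"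
  note S = se[OF SE]
  have i: "i \<in> hom A F M" and d: "d \<in> hom A M C" using S F_M_C_def by simp_all
  have DM: "Dom A d = M" using d by (simp add: hom_iff)
  have obs: "F \<in> Ob A" "M \<in> Ob A" "C \<in> Ob A" using i d hom_ob1 hom_ob2 by blast+
  show "dual_self_rickart A st (Dom A d)"
    unfolding dual_self_rickart_def
  proof (intro ballI allI impI)
    fix g c assume g: "g \<in> hom A (Dom A d) (Dom A d)" and c: "cokernel A g c"
    obtain p h where po: "pushout A d g p h" and cp: "cokernel A (g \<cdot> i) p" using po_exists[OF SE g] by blast
    have sp: "ret_st A st p" using SF po g unfolding dual_self_F_split_def by blast
    have g': "g \<in> hom A M M" using g DM by simp
    define K where "K = Cod A c"
    have ch: "c \<in> hom A M K" using cokernel_hom[OF c] g' K_def by (simp add: hom_iff)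
    have gi: "g \<cdot> i \<in> hom A F M" using comp_hom[OF i g'] .
    have "zero_mor A ((c \<cdot> g) \<cdot> i)" using zero_comp_r[OF cokernel_zero[OF c], of i F] i comp_hom[OF g' ch]
      by (simp add: hom_iff)
    hence "zero_mor A (c \<cdot> (g \<cdot> i))" using assoc[OF i g' ch] by simp
    then obtain q where q: "q \<in> hom A (Cod A p) K" "q \<cdot> p = c"
      using cokernel_fac[OF cp, of c K] ch gi by (auto simp: hom_iff)
    have "ret_st A st q" using KC g po c q K_def unfolding cokernel_comparison_retractions_def by blast
    hence "ret_st A st (q \<cdot> p)" using ret_comp[OF _ sp, of q] q by (simp add: hom_iff)
    thus "ret_st A st c" using q(2) by simp
  qed
  have iM: "Id A M \<in> hom A M M" and iC: "Id A C \<in> hom A C C" using id_hom obs by blast+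
  have "pushout A d (Id A M) d (Id A C)"
  proof (rule po_I)
    show "d \<in> Ar A" "Id A M \<in> Ar A" "d \<in> Ar A" "Id A C \<in> Ar A" "Dom A d = Dom A (Id A M)" "Cod A d = Cod A (Id A C)"
      "Dom A d = Cod A (Id A M)" "Dom A (Id A C) = Cod A d" "d \<cdot> Id A M = Id A C \<cdot> d"
      using d iM iC id_l[OF d] id_r[OF d] by (auto simp: hom_iff)
    fix x y Y assume x0: "x \<in> hom A (Cod A (Id A M)) Y" and y0: "y \<in> hom A (Cod A d) Y" and e: "x \<cdot> Id A M = y \<cdot> d"
    have x: "x \<in> hom A M Y" and y: "y \<in> hom A C Y" using x0 y0 iM F_M_C_def by (simp_all add: hom_iff)
    have e': "y \<cdot> d = x" using e id_r[OF x] by simp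
    show "\<exists>!u. u \<in> hom A (Cod A d) Y \<and> u \<cdot> d = x \<and> u \<cdot> Id A C = y"
    proof (rule ex1I[of _ y])
      show "y \<in> hom A (Cod A d) Y \<and> y \<cdot> d = x \<and> y \<cdot> Id A C = y" using y e' id_r[OF y] F_M_C_def by simp
      fix v assume "v \<in> hom A (Cod A d) Y \<and> v \<cdot> d = x \<and> v \<cdot> Id A C = y"
      thus "v = y" using id_r[of v C Y] F_M_C_def by simp
    qed
  qed
  hence "ret_st A st d" using SF iM DM unfolding dual_self_F_split_def by blast
  hence "is_retraction A d" by (simp add: ret_st_def)
  then obtain s where s: "s \<in> hom A (Cod A d) (Dom A d)" "d \<cdot> s = Id A (Cod A d)" by (rule retraction_E)
  show "iso_direct_sum A (Dom A d) (Dom A i) (Cod A d)" using core_s[OF SE _ s(2)] s(1) DM F_M_C_def by simp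
qed

end

context ab begin

lemma ds_epi: assumes DS: "iso_direct_sum A M F C" and M: "M \<in> Ob A"
  shows "\<exists>\<tau>. \<tau> \<in> hom A M F \<and> epi A \<tau>"
proof -
  obtain p1 p2 \<phi> where P: "product A p1 p2" "Cod A p1 = F" "Cod A p2 = C" and ph: "\<phi> \<in> hom A M (Dom A p1)"
    and iso: "iso A \<phi>"
    using DS unfolding iso_direct_sum_def isomorphic_def by blast
  define PP where "PP = Dom A p1"
  have p: "p1 \<in> hom A PP F" "p2 \<in> hom A PP C" using prod_hom[OF P(1)] P PP_def by simp_all
  obtain \<psi> where ps: "\<psi> \<in> hom A PP M" "\<phi> \<cdot> \<psi> = Id A PP"
    using iso ph PP_def by (elim iso_E) (auto simp: hom_iff)
  have obs: "F \<in> Ob A" "C \<in> Ob A" using p hom_ob2 by blast+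
  note zFC = zm[OF obs(1) obs(2)]
  have iF: "Id A F \<in> hom A F F" using id_hom obs by blast
  obtain \<iota>1 where i1: "\<iota>1 \<in> hom A F PP" "p1 \<cdot> \<iota>1 = Id A F"
    using prod_ex[OF P(1), of "Id A F" F "zm F C"] iF zFC P PP_def by auto
  have m1: "epi A \<phi>" using retraction_epi[OF retraction_I[OF ph[folded PP_def] ps(1) ps(2)]] .
  have m2: "epi A p1" using retraction_epi[OF retraction_I[OF p(1) i1(1) i1(2)]] .
  have "epi A (p1 \<cdot> \<phi>)" using epi_comp[OF m2 m1] ph p(1) by (simp add: hom_iff PP_def)
  moreover have "p1 \<cdot> \<phi> \<in> hom A M F" using comp_hom[OF ph[folded PP_def] p(1)] .
  ultimately show ?thesis by blast
qed

lemma part2_bwd: assumes SE: "short_exact A i d" and SR: "dual_self_rickart A st (Dom A d)"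
  and DS: "iso_direct_sum A (Dom A d) (Dom A i) (Cod A d)"
  shows "dual_self_F_split A st d \<and> cokernel_comparison_retractions A st d"
proof -
  define F M C where "F = Dom A i" "M = Cod A i" "C = Cod A d"
  note S = se[OF SE]
  have i: "i \<in> hom A F M" and d: "d \<in> hom A M C" using S F_M_C_def by simp_all
  have DM: "Dom A d = M" using d by (simp add: hom_iff)
  have obs: "F \<in> Ob A" "M \<in> Ob A" "C \<in> Ob A" using i d hom_ob1 hom_ob2 by blast+
  obtain \<tau> where tg: "\<tau> \<in> hom A M F" "epi A \<tau>" using ds_epi[OF DS] obs F_M_C_def DM by auto
  have cokp: "cokernel A ((g \<cdot> i) \<cdot> \<tau>) p \<and> ret_st A st p"
    if g: "g \<in> hom A M M" and po: "pushout A d g p h" for g p h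
  proof -
    note P = poD[OF po]
    define Q where "Q = Cod A p"
    have p: "p \<in> hom A M Q" and h: "h \<in> hom A C Q" using P g F_M_C_def Q_def d by (auto simp: hom_iff)
    have gi: "g \<cdot> i \<in> hom A F M" using comp_hom[OF i g] .
    have e: "(g \<cdot> i) \<cdot> \<tau> \<in> hom A M M" using comp_hom[OF tg(1) gi] .
    have "cokernel A ((g \<cdot> i) \<cdot> \<tau>) p"
    proof (rule cokernel_I)
      show "(g \<cdot> i) \<cdot> \<tau> \<in> Ar A" "p \<in> Ar A" "Dom A p = Cod A ((g \<cdot> i) \<cdot> \<tau>)" using e p by (auto simp: hom_iff)
      have "p \<cdot> ((g \<cdot> i) \<cdot> \<tau>) = (h \<cdot> (d \<cdot> i)) \<cdot> \<tau>"
        using assoc[OF tg(1) gi p] assoc[OF i g p] P(9) assoc[OF i d h] by simp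
      moreover have "zero_mor A ((h \<cdot> (d \<cdot> i)) \<cdot> \<tau>)"
        using zero_comp_r[OF zero_comp_l[OF kernel_zero[OF S(3)], of h Q], of \<tau> M] tg(1) h comp_hom[OF i d]
          comp_hom[OF comp_hom[OF i d] h] by (simp add: hom_iff)
      ultimately show "zero_mor A (p \<cdot> ((g \<cdot> i) \<cdot> \<tau>))" by simp
      fix x Y assume x0: "x \<in> hom A (Cod A ((g \<cdot> i) \<cdot> \<tau>)) Y" and zx: "zero_mor A (x \<cdot> ((g \<cdot> i) \<cdot> \<tau>))"
      have x: "x \<in> hom A M Y" using x0 e by (simp add: hom_iff)
      have xg: "x \<cdot> g \<in> hom A M Y" using comp_hom[OF g x] .
      have "zero_mor A (((x \<cdot> g) \<cdot> i) \<cdot> \<tau>)" using zx assoc[OF tg(1) gi x] assoc[OF i g x] by simp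
      hence "zero_mor A ((x \<cdot> g) \<cdot> i)" using epi_zero[OF tg(2), of "(x \<cdot> g) \<cdot> i" Y] comp_hom[OF i xg] tg(1)
        by (simp add: hom_iff)
      then obtain y where y: "y \<in> hom A C Y" "y \<cdot> d = x \<cdot> g"
        using cokernel_fac[OF S(4), of "x \<cdot> g" Y] xg d i by (auto simp: hom_iff)
      have U: "\<exists>!u. u \<in> hom A (Cod A p) Y \<and> u \<cdot> p = x \<and> u \<cdot> h = y"
        using po_univ[OF po, of x Y y] x y g d by (simp add: hom_iff)
      then obtain u where u: "u \<in> hom A Q Y" "u \<cdot> p = x" "u \<cdot> h = y" using Q_def by auto
      show "\<exists>!u. u \<in> hom A (Cod A p) Y \<and> u \<cdot> p = x"
      proof (rule ex1I[of _ u])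
        show "u \<in> hom A (Cod A p) Y \<and> u \<cdot> p = x" using u Q_def by simp
        fix v assume v: "v \<in> hom A (Cod A p) Y \<and> v \<cdot> p = x"
        hence v1: "v \<in> hom A Q Y" using Q_def by simp
        have "(v \<cdot> h) \<cdot> d = v \<cdot> (p \<cdot> g)" using assoc[OF d h v1] P(9) by simp
        also have "\<dots> = y \<cdot> d" using assoc[OF g p v1] v y by simp
        finally have "v \<cdot> h = y" using epiD[OF S(2), of "v \<cdot> h" Y y] comp_hom[OF h v1] y d
          by (simp add: hom_iff)
        thus "v = u" using U u v Q_def by (elim ex1E) metis
      qed
    qed
    moreover have "ret_st A st p" using SR calculation e DM unfolding dual_self_rickart_def by blast
    ultimately show ?thesis by simp
  qed
  have SF: "dual_self_F_split A st d" unfolding dual_self_F_split_def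
    using cokp DM by blast
  have KC: "cokernel_comparison_retractions A st d" unfolding cokernel_comparison_retractions_def
  proof (intro ballI allI impI, elim conjE)
    fix g p h c q assume g0: "g \<in> hom A (Dom A d) (Dom A d)" and po: "pushout A d g p h"
      and c: "cokernel A g c" and q0: "q \<in> hom A (Cod A p) (Cod A c)" and qp: "q \<cdot> p = c"
    have g: "g \<in> hom A M M" using g0 DM by simp
    note P = poD[OF po]
    define Q where "Q = Cod A p"
    define K where "K = Cod A c"
    have p: "p \<in> hom A M Q" using P g Q_def by (auto simp: hom_iff)
    have q: "q \<in> hom A Q K" using q0 K_def Q_def by simp
    have sp: "ret_st A st p" using cokp[OF g po] by simp
    have sk: "ret_st A st c" using SR g0 c unfolding dual_self_rickart_def by blast
    obtain tp where tp: "tp \<in> hom A Q M" "p \<cdot> tp = Id A Q"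
      using sp p Q_def by (auto simp: ret_st_def hom_iff elim: retraction_E)
    have ch: "c \<in> hom A M K" using qp comp_hom[OF p q] by simp
    obtain tk where tk: "tk \<in> hom A K M" "c \<cdot> tk = Id A K"
      using sk ch K_def by (auto simp: ret_st_def hom_iff elim: retraction_E)
    have ptk: "p \<cdot> tk \<in> hom A K Q" using comp_hom[OF tk(1) p] .
    have "q \<cdot> (p \<cdot> tk) = Id A K" using assoc[OF tk(1) p q] qp tk by simp
    hence retq: "is_retraction A q" using retraction_I[OF q ptk] by simp
    moreover have "st \<longrightarrow> fully_coinvariant A q"
    proof
      assume st
      hence fk: "fully_coinvariant A c" using sk by (simp add: ret_st_def)
      have mp: "epi A p" using sp by (simp add: ret_st_def retraction_epi)
      show "fully_coinvariant A q"
      proof (rule fc_I)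
        show "epi A q" using retraction_epi[OF retq] .
        fix H assume h0: "H \<in> hom A (Dom A q) (Dom A q)"
        have H: "H \<in> hom A Q Q" using h0 q by (simp add: hom_iff)
        have H': "(tp \<cdot> H) \<cdot> p \<in> hom A M M" using comp_hom[OF p comp_hom[OF H tp(1)]] .
        obtain \<beta> where b: "\<beta> \<in> hom A K K" "c \<cdot> ((tp \<cdot> H) \<cdot> p) = \<beta> \<cdot> c"
          using fc_D[OF fk, of "(tp \<cdot> H) \<cdot> p"] H' ch K_def by (auto simp: hom_iff)
        have "c \<cdot> ((tp \<cdot> H) \<cdot> p) = ((q \<cdot> (p \<cdot> tp)) \<cdot> H) \<cdot> p"
          using qp[symmetric] assoc[OF p comp_hom[OF H tp(1)] ch] assoc[OF comp_hom[OF H tp(1)] p q]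
            assoc[OF H tp(1) comp_hom[OF p q]] assoc[OF tp(1) p q] by simp
        also have "\<dots> = (q \<cdot> H) \<cdot> p" using tp(2) id_r[OF q] by simp
        finally have "(q \<cdot> H) \<cdot> p = (\<beta> \<cdot> q) \<cdot> p" using b(2) qp assoc[OF p q b(1)] by simp
        hence "q \<cdot> H = \<beta> \<cdot> q" using epiD[OF mp, of "q \<cdot> H" K "\<beta> \<cdot> q"] comp_hom[OF H q] comp_hom[OF q b(1)]
          Q_def by simp
        thus "\<exists>\<beta>\<in>hom A (Cod A q) (Cod A q). q \<cdot> H = \<beta> \<cdot> q" using b(1) q by (auto simp: hom_iff)
      qed
    qed
    ultimately show "ret_st A st q" by (simp add: ret_st_def)
  qed
  show ?thesis using SF KC by simp
qed

end

theorem theorem4p12: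
  fixes A :: "('o, 'm) cat" and i d :: 'm
  assumes "abelian A"
    and "short_exact A i d"
    and "fully_invariant A i"
  shows "\<forall>st::bool.
    ((self_F_split A st i \<and> kernel_comparison_sections A st i) \<longleftrightarrow>
       (self_rickart A st (Cod A i) \<and> iso_direct_sum A (Cod A i) (Dom A i) (Cod A d))) \<and>
    ((dual_self_F_split A st d \<and> cokernel_comparison_retractions A st d) \<longleftrightarrow>
       (dual_self_rickart A st (Dom A d) \<and> iso_direct_sum A (Dom A d) (Dom A i) (Cod A d)))"
proof
  fix st
  interpret ab A using assms(1) by unfold_locales
  have DM: "Dom A d = Cod A i" using se(6)[OF assms(2)] by (simp add: hom_iff)
  show "((self_F_split A st i \<and> kernel_comparison_sections A st i) \<longleftrightarrow>
       (self_rickart A st (Cod A i) \<and> iso_direct_sum A (Cod A i) (Dom A i) (Cod A d))) \<and>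
    ((dual_self_F_split A st d \<and> cokernel_comparison_retractions A st d) \<longleftrightarrow>
       (dual_self_rickart A st (Dom A d) \<and> iso_direct_sum A (Dom A d) (Dom A i) (Cod A d)))"
    using part1_fwd[OF assms(2)] part1_bwd[OF assms(2)] part2_fwd[OF assms(2)] part2_bwd[OF assms(2)]
    by blast
qed


end
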